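(* Let $\gamma=(\alpha,\beta)\in\mathbb N_0^{2n}$ with $\alpha\ge\beta$, and let $y_\pm^{(\ell)}$ be the Commutator Chain of Type II generated by $g_+^\gamma,g_-^\gamma$. Suppose that at least one of the following holds: (a) there is an index $k$ with $\alpha_k+\beta_k\ge2$ and $\alpha_k\neq\beta_k$; (b) there are two distinct indices $k,k'$ with $\alpha_k+\beta_k=\alpha_{k'}+\beta_{k'}=1$. Then for all $\ell\ge0$ and $\sigma\in\{+,-\}$, $\deg(y_\sigma^{(\ell)})=3^\ell(|\gamma|-2)+2$.
   Context: Fix $n\ge 1$. The Weyl algebra $A_n$ is the unital associative $\mathbb{C}$-algebra generated by $a_1,\dots,a_n,a_1^\dagger,\dots,a_n^\dagger$ subject to $[a_i,a_j^\dagger]=\delta_{ij}$ and $[a_i,a_j]=[a_i^\dagger,a_j^\dagger]=0$. For $\gamma=(\alpha,\beta)\in\mathbb N_0^{2n}$ set $a^{\gamma}=(a_1^\dagger)^{\alpha_1}\cdots(a_n^\dagger)^{\alpha_n}a_1^{\beta_1}\cdots a_n^{\beta_n}$; these form a $\mathbb C$-basis; $|\gamma|=\sum_j\alpha_j+\sum_j\beta_j$. For $0\neq g\in A_n$, $\deg(g)$ is the largest $|\gamma|$ with $a^\gamma$ having nonzero coefficient in $g$; $\deg(0)=-\infty$. $\dagger$ is the conjugate-linear anti-automorphism with $(a_j)^\dagger=a_j^\dagger$, $(a_j^\dagger)^\dagger=a_j$. $g_+^\gamma=i((a^\gamma)^\dagger+a^\gamma)$, $g_-^\gamma=(a^\gamma)^\dagger-a^\gamma$.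 The order on $\mathbb N_0^n$ is lexicographic. Commutator Chain of Type II generated by $g_+^\gamma,g_-^\gamma$: $y_\sigma^{(0)}=g_\sigma^\gamma$ for $\sigma\in\{+,-\}$, and $y_\sigma^{(\ell+1)}=[y_\sigma^{(\ell)},[y_+^{(\ell)},y_-^{(\ell)}]]$ for $\ell\ge0$. *)

theory Defs
  imports Complex_Main "HOL-Library.Extended_Real"
begin

text \<open>Concrete model of the Weyl algebra via its normal-ordered (PBW) basis.
  A multi-index is a function nat => nat (index j stands for mode j+1);
  a monomial (alpha, beta) stands for the normal-ordered word
  (a_1^dagger)^alpha_1 ... (a_n^dagger)^alpha_n a_1^beta_1 ... a_n^beta_n.
  An element of the algebra is its coefficient function (finite support).\<close>

type_synonym midx = "nat \<Rightarrow> nat"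
type_synonym mono = "midx \<times> midx"
type_synonym weyl = "mono \<Rightarrow> complex"

definition wsupp :: "weyl \<Rightarrow> mono set" where
  "wsupp f = {m. f m \<noteq> 0}"

text \<open>Normal ordering constant: a^b (a^dagger)^a' =
  sum_k prod_j k_j! C(b_j,k_j) C(a'_j,k_j) (a^dagger)^(a'-k) a^(b-k).\<close>
definition nc_coeff :: "midx \<Rightarrow> midx \<Rightarrow> midx \<Rightarrow> nat" where
  "nc_coeff b a' k = (\<Prod>j\<in>{j. k j \<noteq> 0}. fact (k j) * (b j choose k j) * (a' j choose k j))"

definition wmult :: "weyl \<Rightarrow> weyl \<Rightarrow> weyl" where
  "wmult f g = (\<lambda>m. \<Sum>m1\<in>wsupp f. \<Sum>m2\<in>wsupp g.
      \<Sum>k\<in>{k. \<forall>j. k j \<le> min (snd m1 j) (fst m2 j)}.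
        if m = (\<lambda>j. fst m1 j + fst m2 j - k j, \<lambda>j. snd m1 j + snd m2 j - k j)
        then f m1 * g m2 * of_nat (nc_coeff (snd m1) (fst m2) k) else 0)"

definition wcomm :: "weyl \<Rightarrow> weyl \<Rightarrow> weyl" where
  "wcomm f g = (\<lambda>m. wmult f g m - wmult g f m)"

text \<open>The conjugate-linear anti-automorphism dagger: it maps the basis word
  (a^dagger)^alpha a^beta to (a^dagger)^beta a^alpha.\<close>
definition wdagger :: "weyl \<Rightarrow> weyl" where
  "wdagger f = (\<lambda>(a, b). cnj (f (b, a)))"

definition wbasis :: "mono \<Rightarrow> weyl" where
  "wbasis m = (\<lambda>m'. if m' = m then 1 else 0)"

definition gplus :: "mono \<Rightarrow> weyl" where
  "gplus m = (\<lambda>x. \<i> * (wdagger (wbasis m) x + wbasis m x))"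

definition gminus :: "mono \<Rightarrow> weyl" where
  "gminus m = (\<lambda>x. wdagger (wbasis m) x - wbasis m x)"

definition mono_deg :: "mono \<Rightarrow> nat" where
  "mono_deg m = (\<Sum>j\<in>{j. fst m j \<noteq> 0}. fst m j) + (\<Sum>j\<in>{j. snd m j \<noteq> 0}. snd m j)"

definition wdeg :: "weyl \<Rightarrow> ereal" where
  "wdeg f = (if f = (\<lambda>_. 0) then -\<infinity> else ereal (real (Max (mono_deg ` wsupp f))))"

text \<open>Commutator chain of type II: component 1 is y_+, component 2 is y_-.\<close>
fun chain2 :: "weyl \<Rightarrow> weyl \<Rightarrow> nat \<Rightarrow> weyl \<times> weyl" where
  "chain2 p q 0 = (p, q)"
| "chain2 p q (Suc l) =
     (let (yp, ym) = chain2 p q l; c = wcomm yp ym in (wcomm yp c, wcomm ym c))"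

definition lex_ge :: "nat \<Rightarrow> midx \<Rightarrow> midx \<Rightarrow> bool" where
  "lex_ge n a b \<longleftrightarrow> (\<forall>j<n. a j = b j) \<or>
     (\<exists>k<n. (\<forall>j<k. a j = b j) \<and> a k > b k)"

end

theory Submission imports Defs "HOL-Library.FuncSet" "HOL-Computational_Algebra.Polynomial" begin

definition Bn :: "nat \<Rightarrow> mono set" where
  "Bn n = {m. \<forall>j\<ge>n. fst m j = 0 \<and> snd m j = 0}"
definition good :: "nat \<Rightarrow> weyl \<Rightarrow> bool" where
  "good n f \<longleftrightarrow> finite (wsupp f) \<and> wsupp f \<subseteq> Bn n"
definition degle :: "nat \<Rightarrow> weyl \<Rightarrow> bool" where
  "degle d f \<longleftrightarrow> (\<forall>m\<in>wsupp f. mono_deg m \<le> d)"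
definition topd :: "nat \<Rightarrow> weyl \<Rightarrow> weyl" where
  "topd d f = (\<lambda>m. if mono_deg m = d then f m else 0)"
definition ej :: "nat \<Rightarrow> nat \<Rightarrow> nat" where
  "ej j = (\<lambda>i. if i = j then 1 else 0)"
definition out :: "mono \<Rightarrow> mono \<Rightarrow> (nat \<Rightarrow> nat) \<Rightarrow> mono" where
  "out m1 m2 k = (\<lambda>j. fst m1 j + fst m2 j - k j, \<lambda>j. snd m1 j + snd m2 j - k j)"
definition KK :: "mono \<Rightarrow> mono \<Rightarrow> (nat \<Rightarrow> nat) set" where
  "KK m1 m2 = {k. \<forall>j. k j \<le> min (snd m1 j) (fst m2 j)}"
definition PP :: "nat \<Rightarrow> weyl \<Rightarrow> weyl \<Rightarrow> weyl" where
  "PP n F G = (\<lambda>m. \<Sum>m1\<in>wsupp F. \<Sum>m2\<in>wsupp G. \<Sum>j<n.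
      if m = out m1 m2 (ej j) then F m1 * G m2 * of_nat (snd m1 j * fst m2 j) else 0)"
definition pb :: "nat \<Rightarrow> weyl \<Rightarrow> weyl \<Rightarrow> weyl" where
  "pb n F G = (\<lambda>m. PP n F G m - PP n G F m)"
definition mdeg :: "nat \<Rightarrow> mono \<Rightarrow> nat" where
  "mdeg n m = (\<Sum>j<n. fst m j + snd m j)"

lemma wmult_alt: "wmult f g m = (\<Sum>m1\<in>wsupp f. \<Sum>m2\<in>wsupp g. \<Sum>k\<in>KK m1 m2.
   if m = out m1 m2 k then f m1 * g m2 * of_nat (nc_coeff (snd m1) (fst m2) k) else 0)"
  by (simp add: wmult_def KK_def out_def)

lemma mono_deg_Bn: assumes "m \<in> Bn n" shows "mono_deg m = mdeg n m"
proof -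
  have a: "(\<Sum>j\<in>{j. fst m j \<noteq> 0}. fst m j) = (\<Sum>j<n. fst m j)"
    by (rule sum.mono_neutral_left) (use assms in \<open>auto simp: Bn_def not_less[symmetric]\<close>)
  have b: "(\<Sum>j\<in>{j. snd m j \<noteq> 0}. snd m j) = (\<Sum>j<n. snd m j)"
    by (rule sum.mono_neutral_left) (use assms in \<open>auto simp: Bn_def not_less[symmetric]\<close>)
  show ?thesis unfolding mono_deg_def mdeg_def a b by (simp add: sum.distrib)
qed

lemma finite_bounded_funs:
  assumes "\<forall>j\<ge>n. b j = 0"
  shows "finite {k::nat\<Rightarrow>nat. \<forall>j. k j \<le> b j}"
proof -
  have "{k::nat\<Rightarrow>nat. \<forall>j. k j \<le> b j} \<subseteq> (\<lambda>f j. if j < n then f j else 0) ` (PiE {..<n} (\<lambda>j. {..b j}))"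
  proof
    fix k assume k: "k \<in> {k::nat\<Rightarrow>nat. \<forall>j. k j \<le> b j}"
    have "k = (\<lambda>j. if j < n then restrict k {..<n} j else 0)"
      using k assms by (auto simp: fun_eq_iff) (metis le_zero_eq not_less)
    moreover have "restrict k {..<n} \<in> PiE {..<n} (\<lambda>j. {..b j})" using k by auto
    ultimately show "k \<in> (\<lambda>f j. if j < n then f j else 0) ` (PiE {..<n} (\<lambda>j. {..b j}))" by blast
  qed
  moreover have "finite (PiE {..<n} (\<lambda>j. {..b j}))" by (rule finite_PiE) auto
  ultimately show ?thesis using finite_surj by blast
qed

lemma finite_KK: assumes "m1 \<in> Bn n" shows "finite (KK m1 m2)"
proof -
  have "KK m1 m2 \<subseteq> {k. \<forall>j. k j \<le> snd m1 j}" by (auto simp: KK_def)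
  moreover have "finite {k::nat\<Rightarrow>nat. \<forall>j. k j \<le> snd m1 j}"
    by (rule finite_bounded_funs[of n]) (use assms in \<open>auto simp: Bn_def\<close>)
  ultimately show ?thesis by (rule finite_subset)
qed

lemma KK_Bn: "m1 \<in> Bn n \<Longrightarrow> k \<in> KK m1 m2 \<Longrightarrow> j \<ge> n \<Longrightarrow> k j = 0"
  unfolding KK_def Bn_def by (metis (mono_tags, lifting) le_zero_eq mem_Collect_eq min.bounded_iff)

lemma out_Bn: "m1 \<in> Bn n \<Longrightarrow> m2 \<in> Bn n \<Longrightarrow> out m1 m2 k \<in> Bn n"
  by (auto simp: Bn_def out_def)

lemma mdeg_out:
  assumes "k \<in> KK m1 m2"
  shows "mdeg n (out m1 m2 k) + 2 * (\<Sum>j<n. k j) = mdeg n m1 + mdeg n m2"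
proof -
  have "\<And>j. (fst m1 j + fst m2 j - k j) + (snd m1 j + snd m2 j - k j) + 2 * k j
        = (fst m1 j + snd m1 j) + (fst m2 j + snd m2 j)"
  proof -
    fix j have "k j \<le> snd m1 j" "k j \<le> fst m2 j" using assms by (auto simp: KK_def)
    thus "(fst m1 j + fst m2 j - k j) + (snd m1 j + snd m2 j - k j) + 2 * k j
        = (fst m1 j + snd m1 j) + (fst m2 j + snd m2 j)" by linarith
  qed
  hence "(\<Sum>j<n. (fst m1 j + fst m2 j - k j) + (snd m1 j + snd m2 j - k j) + 2 * k j)
        = (\<Sum>j<n. (fst m1 j + snd m1 j) + (fst m2 j + snd m2 j))" by simp
  thus ?thesis by (simp add: mdeg_def out_def sum.distrib sum_distrib_left)
qed

lemma ej_KK: "(ej j \<in> KK m1 m2) = (1 \<le> snd m1 j \<and> 1 \<le> fst m2 j)"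
  by (auto simp: KK_def ej_def)

lemma nc_zero: "nc_coeff b a (\<lambda>_. 0) = 1"
  by (simp add: nc_coeff_def)

lemma nc_ej: "nc_coeff b a (ej j) = b j * a j"
proof -
  have "{i. ej j i \<noteq> 0} = {j}" by (auto simp: ej_def)
  thus ?thesis by (simp add: nc_coeff_def ej_def)
qed

lemma zero_KK: "(\<lambda>_. 0) \<in> KK m1 m2" by (simp add: KK_def)

lemma out_zero: "out m1 m2 (\<lambda>_. 0) = (\<lambda>j. fst m1 j + fst m2 j, \<lambda>j. snd m1 j + snd m2 j)"
  by (simp add: out_def)

lemma inj_ej: "inj ej"
proof (rule injI)
  fix a b assume "ej a = ej b" hence "ej a a = ej b a" by simp
  thus "a = b" by (auto simp: ej_def split: if_splits)
qed

lemma ej_nz: "ej j \<noteq> (\<lambda>_. 0)"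
proof
  assume "ej j = (\<lambda>_. 0)" hence "ej j j = 0" by simp
  thus False by (simp add: ej_def)
qed

lemma sum1_ej:
  assumes "(\<Sum>j<n. k j) = 1" "\<forall>j\<ge>n. k j = 0"
  shows "\<exists>j<n. k = ej j"
proof -
  from assms(1) obtain j where j: "j<n" "k j = 1" "\<forall>b<n. j \<noteq> b \<longrightarrow> k b = 0"
    using sum_eq_1_iff[of "{..<n}" k] by auto
  have "k = ej j"
  proof
    fix x show "k x = ej j x"
    proof (cases "x < n")
      case True thus ?thesis using j by (cases "x = j") (auto simp: ej_def)
    next
      case False thus ?thesis using assms(2) j(1) by (auto simp: ej_def)
    qed
  qed
  thus ?thesis using j by blast
qed

lemma sum0_zero:
  fixes k :: "nat \<Rightarrow> nat"
  assumes "(\<Sum>j<n. k j) = (0::nat)" "\<forall>j\<ge>n. k j = 0"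
  shows "k = (\<lambda>_. 0)"
proof
  fix x show "k x = 0"
  proof (cases "x < n")
    case True thus ?thesis using assms(1) sum_eq_0_iff[of "{..<n}" k] by auto
  next
    case False thus ?thesis using assms(2) by simp
  qed
qed

lemma wsum_split:
  assumes m1: "m1 \<in> Bn n" and m2: "m2 \<in> Bn n"
    and d1: "mono_deg m1 \<le> d1" and d2: "mono_deg m2 \<le> d2"
    and dm: "m \<in> Bn n \<Longrightarrow> mono_deg m \<ge> d1 + d2 - 2" and dd: "d1 + d2 \<ge> 2"
  shows "(\<Sum>k\<in>KK m1 m2. if m = out m1 m2 k then X * of_nat (nc_coeff (snd m1) (fst m2) k) else 0) =
    (if m = out m1 m2 (\<lambda>_. 0) then X else 0) +
    (if mono_deg m1 = d1 \<and> mono_deg m2 = d2 then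
       (\<Sum>j<n. if m = out m1 m2 (ej j) then X * of_nat (snd m1 j * fst m2 j) else 0) else 0)"
proof -
  define h where "h = (\<lambda>k. if m = out m1 m2 k then X * of_nat (nc_coeff (snd m1) (fst m2) k) else 0)"
  define K where "K = KK m1 m2"
  have fK: "finite K" unfolding K_def by (rule finite_KK[OF m1])
  have e1: "mdeg n m1 = mono_deg m1" "mdeg n m2 = mono_deg m2"
    using mono_deg_Bn[OF m1] mono_deg_Bn[OF m2] by auto
  have key: "(\<Sum>j<n. k j) = 1 \<and> mono_deg m1 = d1 \<and> mono_deg m2 = d2"
    if k: "k \<in> K" "k \<noteq> (\<lambda>_. 0)" "m = out m1 m2 k" for k
  proof -
    have mB: "m \<in> Bn n" using k(3) out_Bn[OF m1 m2] by simp
    have eq: "mdeg n m + 2 * (\<Sum>j<n. k j) = mdeg n m1 + mdeg n m2"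
      using mdeg_out[where n=n] k unfolding K_def by simp
    have "mdeg n m = mono_deg m" using mono_deg_Bn[OF mB] by simp
    hence ge: "mdeg n m \<ge> d1 + d2 - 2" using dm mB by simp
    have kn: "\<forall>j\<ge>n. k j = 0" using KK_Bn[OF m1] k unfolding K_def by blast
    have "(\<Sum>j<n. k j) \<noteq> 0" using sum0_zero[where n=n and k=k] kn k(2) by auto
    thus ?thesis using eq ge e1 d1 d2 dd by linarith
  qed
  have s1: "sum h K = h (\<lambda>_. 0) + sum h (K - {\<lambda>_. 0})"
    using fK zero_KK[of m1 m2] unfolding K_def by (rule sum.remove)
  have s2: "sum h (K - {\<lambda>_. 0}) = sum h (ej ` {j\<in>{..<n}. ej j \<in> K})"
  proof (rule sum.mono_neutral_right)
    show "finite (K - {\<lambda>_. 0})" using fK by simp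
    show "ej ` {j \<in> {..<n}. ej j \<in> K} \<subseteq> K - {\<lambda>_. 0}"
      using ej_nz by auto
    show "\<forall>i\<in>K - {\<lambda>_. 0} - ej ` {j \<in> {..<n}. ej j \<in> K}. h i = 0"
    proof
      fix k assume k: "k \<in> K - {\<lambda>_. 0} - ej ` {j \<in> {..<n}. ej j \<in> K}"
      show "h k = 0"
      proof (rule ccontr)
        assume "h k \<noteq> 0"
        hence mo: "m = out m1 m2 k" by (auto simp: h_def split: if_splits)
        have kn: "\<forall>j\<ge>n. k j = 0" using KK_Bn[OF m1] k unfolding K_def by blast
        from key[of k] k mo have "(\<Sum>j<n. k j) = 1" by auto
        then obtain j where "j<n" "k = ej j" using sum1_ej kn by blast
        thus False using k by auto
      qed
    qed
  qed
  have s3: "sum h (ej ` {j\<in>{..<n}. ej j \<in> K}) = sum (h \<circ> ej) {j\<in>{..<n}. ej j \<in> K}"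
    by (rule sum.reindex) (meson inj_ej inj_on_subset subset_UNIV)
  define h' where "h' = (\<lambda>j. if m = out m1 m2 (ej j) then X * of_nat (snd m1 j * fst m2 j) else 0)"
  have s4: "sum (h \<circ> ej) {j\<in>{..<n}. ej j \<in> K} = (\<Sum>j<n. h' j)"
  proof (rule sum.mono_neutral_cong_left)
    show "\<forall>i\<in>{..<n} - {j \<in> {..<n}. ej j \<in> K}. h' i = 0"
    proof
      fix i assume "i \<in> {..<n} - {j \<in> {..<n}. ej j \<in> K}"
      hence "\<not>(1 \<le> snd m1 i \<and> 1 \<le> fst m2 i)" by (simp add: K_def ej_KK)
      hence "snd m1 i = 0 \<or> fst m2 i = 0" by auto
      thus "h' i = 0" by (auto simp: h'_def)
    qed
    show "\<And>x. x \<in> {j \<in> {..<n}. ej j \<in> K} \<Longrightarrow> (h \<circ> ej) x = h' x"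
      by (simp add: h_def h'_def nc_ej)
  qed auto
  have s5: "(\<Sum>j<n. h' j) = (if mono_deg m1 = d1 \<and> mono_deg m2 = d2 then (\<Sum>j<n. h' j) else 0)"
  proof (cases "mono_deg m1 = d1 \<and> mono_deg m2 = d2")
    case False
    have "h' j = 0" for j
    proof (rule ccontr)
      assume "h' j \<noteq> 0"
      hence "m = out m1 m2 (ej j)" by (auto simp: h'_def split: if_splits)
      have "snd m1 j * fst m2 j \<noteq> 0"
      proof
        assume "snd m1 j * fst m2 j = 0"
        hence "h' j = 0" by (auto simp: h'_def)
        thus False using \<open>h' j \<noteq> 0\<close> by simp
      qed
      hence "ej j \<in> K" "ej j \<noteq> (\<lambda>_. 0)" using ej_nz by (auto simp: K_def ej_KK)
      thus False using key[of "ej j"] False \<open>m = out m1 m2 (ej j)\<close> by auto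
    qed
    thus ?thesis by simp
  qed simp
  have h0: "h (\<lambda>_. 0) = (if m = out m1 m2 (\<lambda>_. 0) then X else 0)" by (simp add: h_def nc_zero)
  have "sum h K = (if m = out m1 m2 (\<lambda>_. 0) then X else 0) + (\<Sum>j<n. h' j)"
    by (simp only: s1 s2 s3 s4 h0)
  also have "\<dots> = (if m = out m1 m2 (\<lambda>_. 0) then X else 0) +
    (if mono_deg m1 = d1 \<and> mono_deg m2 = d2 then (\<Sum>j<n. h' j) else 0)"
    by (rule arg_cong[OF s5])
  finally have "sum h K = (if m = out m1 m2 (\<lambda>_. 0) then X else 0) +
    (if mono_deg m1 = d1 \<and> mono_deg m2 = d2 then (\<Sum>j<n. h' j) else 0)" .
  thus ?thesis unfolding h_def K_def h'_def by assumption
qed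


lemma wsupp_iff: "m \<in> wsupp f \<longleftrightarrow> f m \<noteq> 0" by (simp add: wsupp_def)

lemma PP_superset:
  assumes "finite A" "wsupp F \<subseteq> A" "finite B" "wsupp G \<subseteq> B"
  shows "PP n F G m = (\<Sum>m1\<in>A. \<Sum>m2\<in>B. \<Sum>j<n.
      if m = out m1 m2 (ej j) then F m1 * G m2 * of_nat (snd m1 j * fst m2 j) else 0)"
proof -
  have i: "(\<Sum>m2\<in>wsupp G. \<Sum>j<n. if m = out m1 m2 (ej j) then F m1 * G m2 * of_nat (snd m1 j * fst m2 j) else 0)
     = (\<Sum>m2\<in>B. \<Sum>j<n. if m = out m1 m2 (ej j) then F m1 * G m2 * of_nat (snd m1 j * fst m2 j) else 0)" for m1
  proof (rule sum.mono_neutral_left)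
    show "finite B" "wsupp G \<subseteq> B" using assms by auto
    show "\<forall>i\<in>B - wsupp G. (\<Sum>j<n. if m = out m1 i (ej j) then F m1 * G i * of_nat (snd m1 j * fst i j) else 0) = 0"
    proof
      fix i assume "i \<in> B - wsupp G" hence "G i = 0" by (simp add: wsupp_def)
      thus "(\<Sum>j<n. if m = out m1 i (ej j) then F m1 * G i * of_nat (snd m1 j * fst i j) else 0) = 0" by (simp cong: if_cong)
    qed
  qed
  show ?thesis unfolding PP_def i
  proof (rule sum.mono_neutral_left)
    show "finite A" "wsupp F \<subseteq> A" using assms by auto
    show "\<forall>i\<in>A - wsupp F. (\<Sum>m2\<in>B. \<Sum>j<n. if m = out i m2 (ej j) then F i * G m2 * of_nat (snd i j * fst m2 j) else 0) = 0"
    proof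
      fix i assume "i \<in> A - wsupp F" hence "F i = 0" by (simp add: wsupp_def)
      thus "(\<Sum>m2\<in>B. \<Sum>j<n. if m = out i m2 (ej j) then F i * G m2 * of_nat (snd i j * fst m2 j) else 0) = 0" by (simp cong: if_cong)
    qed
  qed
qed

lemma PP_supp:
  assumes "PP n F G m \<noteq> 0"
  shows "\<exists>m1\<in>wsupp F. \<exists>m2\<in>wsupp G. \<exists>j<n. m = out m1 m2 (ej j) \<and> snd m1 j * fst m2 j \<noteq> 0"
proof (rule ccontr)
  assume "\<not> ?thesis"
  hence "\<And>m1 m2 j. m1\<in>wsupp F \<Longrightarrow> m2\<in>wsupp G \<Longrightarrow> j<n \<Longrightarrow>
     (if m = out m1 m2 (ej j) then F m1 * G m2 * of_nat (snd m1 j * fst m2 j) else 0) = 0"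
    by fastforce
  hence "PP n F G m = 0" unfolding PP_def by simp
  thus False using assms by simp
qed

lemma wmult_supp:
  assumes "wmult f g m \<noteq> 0"
  shows "\<exists>m1\<in>wsupp f. \<exists>m2\<in>wsupp g. \<exists>k\<in>KK m1 m2. m = out m1 m2 k"
proof (rule ccontr)
  assume "\<not> ?thesis"
  hence "\<And>m1 m2 k. m1\<in>wsupp f \<Longrightarrow> m2\<in>wsupp g \<Longrightarrow> k \<in> KK m1 m2 \<Longrightarrow>
     (if m = out m1 m2 k then f m1 * g m2 * of_nat (nc_coeff (snd m1) (fst m2) k) else 0) = 0"
    by fastforce
  hence "wmult f g m = 0" unfolding wmult_alt by simp
  thus False using assms by simp
qed

definition OUT :: "weyl \<Rightarrow> weyl \<Rightarrow> mono set" where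
  "OUT f g = (\<lambda>(m1,m2,k). out m1 m2 k) ` (SIGMA m1:wsupp f. SIGMA m2:wsupp g. KK m1 m2)"

lemma finite_OUT: assumes "good n f" "good n g" shows "finite (OUT f g)"
  unfolding OUT_def
proof (rule finite_imageI, rule finite_SigmaI)
  show "finite (wsupp f)" using assms by (simp add: good_def)
  fix m1 assume "m1 \<in> wsupp f"
  hence m1: "m1 \<in> Bn n" using assms by (auto simp: good_def)
  show "finite (SIGMA m2:wsupp g. KK m1 m2)"
    by (rule finite_SigmaI) (use assms finite_KK[OF m1] in \<open>auto simp: good_def\<close>)
qed

lemma wmult_supp_OUT: "wsupp (wmult f g) \<subseteq> OUT f g"
proof
  fix m assume "m \<in> wsupp (wmult f g)"
  hence "wmult f g m \<noteq> 0" by (simp add: wsupp_def)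
  from wmult_supp[OF this] obtain m1 m2 k where "m1\<in>wsupp f" "m2\<in>wsupp g" "k\<in>KK m1 m2" "m = out m1 m2 k"
    by blast
  thus "m \<in> OUT f g" unfolding OUT_def by force
qed

lemma OUT_Bn: assumes "good n f" "good n g" shows "OUT f g \<subseteq> Bn n"
  using assms out_Bn by (auto simp: OUT_def good_def) blast

lemma wcomm_supp: "wsupp (wcomm f g) \<subseteq> OUT f g \<union> OUT g f"
proof
  fix m assume "m \<in> wsupp (wcomm f g)"
  hence "wmult f g m \<noteq> 0 \<or> wmult g f m \<noteq> 0" by (auto simp: wsupp_def wcomm_def)
  thus "m \<in> OUT f g \<union> OUT g f" using wmult_supp_OUT[of f g] wmult_supp_OUT[of g f]
    by (auto simp: wsupp_def)
qed

lemma good_wcomm: assumes "good n f" "good n g" shows "good n (wcomm f g)"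
  unfolding good_def
proof
  show "finite (wsupp (wcomm f g))"
    by (rule finite_subset[OF wcomm_supp]) (use finite_OUT assms in auto)
  show "wsupp (wcomm f g) \<subseteq> Bn n" using wcomm_supp OUT_Bn assms by blast
qed

definition ZZ :: "weyl \<Rightarrow> weyl \<Rightarrow> mono \<Rightarrow> complex" where
  "ZZ f g m = (\<Sum>m1\<in>wsupp f. \<Sum>m2\<in>wsupp g. if m = out m1 m2 (\<lambda>_. 0) then f m1 * g m2 else 0)"

lemma ZZ_sym: "ZZ f g m = ZZ g f m"
proof -
  have oc: "out m1 m2 (\<lambda>_. 0) = out m2 m1 (\<lambda>_. 0)" for m1 m2
    by (simp add: out_def add.commute)
  have pw: "(if m = out m1 m2 (\<lambda>_. 0) then f m1 * g m2 else 0) = (if m = out m2 m1 (\<lambda>_. 0) then g m2 * f m1 else 0)" for m1 m2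
    by (subst oc) (simp add: mult.commute)
  have "ZZ f g m = (\<Sum>m1\<in>wsupp f. \<Sum>m2\<in>wsupp g. if m = out m2 m1 (\<lambda>_. 0) then g m2 * f m1 else 0)"
    unfolding ZZ_def by (simp only: pw)
  also have "\<dots> = ZZ g f m" unfolding ZZ_def by (rule sum.swap)
  finally show ?thesis .
qed

lemma wmult_split:
  assumes f: "good n f" "degle d1 f" and g: "good n g" "degle d2 g" and dd: "d1 + d2 \<ge> 2"
    and dm: "m \<in> Bn n \<Longrightarrow> mono_deg m \<ge> d1 + d2 - 2"
  shows "wmult f g m = ZZ f g m + PP n (topd d1 f) (topd d2 g) m"
proof -
  have fS: "finite (wsupp f)" "wsupp f \<subseteq> Bn n" using f by (auto simp: good_def)
  have gS: "finite (wsupp g)" "wsupp g \<subseteq> Bn n" using g by (auto simp: good_def)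
  define T where "T m1 m2 = (if mono_deg m1 = d1 \<and> mono_deg m2 = d2 then
       (\<Sum>j<n. if m = out m1 m2 (ej j) then f m1 * g m2 * of_nat (snd m1 j * fst m2 j) else 0) else 0)" for m1 m2
  have "wmult f g m = (\<Sum>m1\<in>wsupp f. \<Sum>m2\<in>wsupp g.
      (if m = out m1 m2 (\<lambda>_. 0) then f m1 * g m2 else 0) + T m1 m2)"
    unfolding wmult_alt
  proof (rule sum.cong[OF refl], rule sum.cong[OF refl])
    fix m1 m2 assume m1: "m1 \<in> wsupp f" and m2: "m2 \<in> wsupp g"
    show "(\<Sum>k\<in>KK m1 m2. if m = out m1 m2 k then f m1 * g m2 * of_nat (nc_coeff (snd m1) (fst m2) k) else 0) =
      (if m = out m1 m2 (\<lambda>_. 0) then f m1 * g m2 else 0) + T m1 m2"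
      unfolding T_def
      by (rule wsum_split) (use m1 m2 fS gS f g dd dm in \<open>auto simp: degle_def\<close>)
  qed
  also have "\<dots> = ZZ f g m + (\<Sum>m1\<in>wsupp f. \<Sum>m2\<in>wsupp g. T m1 m2)"
    unfolding ZZ_def by (simp add: sum.distrib)
  also have "(\<Sum>m1\<in>wsupp f. \<Sum>m2\<in>wsupp g. T m1 m2) = PP n (topd d1 f) (topd d2 g) m"
  proof -
    have "PP n (topd d1 f) (topd d2 g) m = (\<Sum>m1\<in>wsupp f. \<Sum>m2\<in>wsupp g. \<Sum>j<n.
      if m = out m1 m2 (ej j) then topd d1 f m1 * topd d2 g m2 * of_nat (snd m1 j * fst m2 j) else 0)"
      by (rule PP_superset) (use fS gS in \<open>auto simp: wsupp_def topd_def\<close>)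
    also have "\<dots> = (\<Sum>m1\<in>wsupp f. \<Sum>m2\<in>wsupp g. T m1 m2)"
    proof -
      have pw: "(\<Sum>j<n. if m = out m1 m2 (ej j) then topd d1 f m1 * topd d2 g m2 * of_nat (snd m1 j * fst m2 j) else 0) = T m1 m2" for m1 m2
        by (cases "mono_deg m1 = d1 \<and> mono_deg m2 = d2") (auto simp: T_def topd_def cong: if_cong)
      show ?thesis by (simp only: pw)
    qed
    finally show ?thesis by simp
  qed
  finally show ?thesis .
qed

lemma pb_top_supp:
  assumes f: "good n f" and g: "good n g" and "pb n (topd d1 f) (topd d2 g) m \<noteq> 0"
  shows "m \<in> Bn n \<and> mono_deg m = d1 + d2 - 2"
proof -
  have gen: "m \<in> Bn n \<and> mono_deg m = d1 + d2 - 2"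
    if F: "good n F" "good n G" "PP n (topd a F) (topd b G) m \<noteq> 0" "a + b = d1 + d2" for F G a b
  proof -
    obtain m1 m2 j where j: "m1\<in>wsupp (topd a F)" "m2\<in>wsupp (topd b G)" "j<n" "m = out m1 m2 (ej j)"
       "snd m1 j * fst m2 j \<noteq> 0"
      using PP_supp[OF F(3)] by blast
    have B: "m1 \<in> Bn n" "m2 \<in> Bn n" using j F by (auto simp: good_def wsupp_def topd_def split: if_splits)
    have dg: "mono_deg m1 = a" "mono_deg m2 = b" using j by (auto simp: wsupp_def topd_def split: if_splits)
    have K: "ej j \<in> KK m1 m2" using j(5) by (simp add: ej_KK)
    have s: "(\<Sum>i<n. ej j i) = 1" using j(3) by (simp add: ej_def)
    have mB: "m \<in> Bn n" using out_Bn[OF B] j(4) by simp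
    have "mdeg n m + 2 = mdeg n m1 + mdeg n m2" using mdeg_out[where n=n, OF K] s j(4) by simp
    thus ?thesis using mono_deg_Bn[OF mB] mono_deg_Bn[OF B(1)] mono_deg_Bn[OF B(2)] dg F(4) mB by simp
  qed
  from assms(3) have "PP n (topd d1 f) (topd d2 g) m \<noteq> 0 \<or> PP n (topd d2 g) (topd d1 f) m \<noteq> 0"
    by (auto simp: pb_def)
  thus ?thesis using gen[OF f g, of d1 d2] gen[OF g f, of d2 d1] by auto
qed

lemma wcomm_main:
  assumes f: "good n f" "degle d1 f" and g: "good n g" "degle d2 g" and dd: "d1 + d2 \<ge> 2"
  shows "good n (wcomm f g)" "degle (d1 + d2 - 2) (wcomm f g)"
    "topd (d1 + d2 - 2) (wcomm f g) = pb n (topd d1 f) (topd d2 g)"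
proof -
  show G: "good n (wcomm f g)" using good_wcomm f g by blast
  have eq: "wcomm f g m = pb n (topd d1 f) (topd d2 g) m"
    if dm: "m \<in> Bn n \<Longrightarrow> mono_deg m \<ge> d1 + d2 - 2" for m
  proof -
    have "wmult f g m = ZZ f g m + PP n (topd d1 f) (topd d2 g) m"
      by (rule wmult_split[OF f g dd dm])
    moreover have "wmult g f m = ZZ g f m + PP n (topd d2 g) (topd d1 f) m"
      by (rule wmult_split[OF g f]) (use dd dm in auto)
    ultimately show ?thesis by (simp add: wcomm_def pb_def ZZ_sym[of g f])
  qed
  show "degle (d1 + d2 - 2) (wcomm f g)" unfolding degle_def
  proof
    fix m assume m: "m \<in> wsupp (wcomm f g)"
    show "mono_deg m \<le> d1 + d2 - 2"
    proof (rule ccontr)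
      assume nd: "\<not> mono_deg m \<le> d1 + d2 - 2"
      hence "wcomm f g m = pb n (topd d1 f) (topd d2 g) m" by (intro eq) simp
      hence "pb n (topd d1 f) (topd d2 g) m \<noteq> 0" using m by (simp add: wsupp_def)
      thus False using pb_top_supp[OF f(1) g(1)] nd by fastforce
    qed
  qed
  show "topd (d1 + d2 - 2) (wcomm f g) = pb n (topd d1 f) (topd d2 g)"
  proof
    fix m
    show "topd (d1 + d2 - 2) (wcomm f g) m = pb n (topd d1 f) (topd d2 g) m"
    proof (cases "mono_deg m = d1 + d2 - 2")
      case True
      thus ?thesis using eq[of m] by (simp add: topd_def)
    next
      case False
      hence "pb n (topd d1 f) (topd d2 g) m = 0" using pb_top_supp[OF f(1) g(1)] by blast
      thus ?thesis using False by (simp add: topd_def)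
    qed
  qed
qed


lemma wsupp_lin: "wsupp (\<lambda>m. a * F m + b * F' m) \<subseteq> wsupp F \<union> wsupp F'"
  by (auto simp: wsupp_def)

lemma PP_lin1:
  assumes "finite (wsupp F)" "finite (wsupp F')" "finite (wsupp G)"
  shows "PP n (\<lambda>m. a * F m + b * F' m) G m = a * PP n F G m + b * PP n F' G m"
proof -
  let ?A = "wsupp F \<union> wsupp F'"
  have fA: "finite ?A" using assms by simp
  have e1: "PP n (\<lambda>m. a * F m + b * F' m) G m = (\<Sum>m1\<in>?A. \<Sum>m2\<in>wsupp G. \<Sum>j<n.
      if m = out m1 m2 (ej j) then (a * F m1 + b * F' m1) * G m2 * of_nat (snd m1 j * fst m2 j) else 0)"
    by (rule PP_superset[OF fA wsupp_lin assms(3)]) simp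
  have e2: "PP n F G m = (\<Sum>m1\<in>?A. \<Sum>m2\<in>wsupp G. \<Sum>j<n.
      if m = out m1 m2 (ej j) then F m1 * G m2 * of_nat (snd m1 j * fst m2 j) else 0)"
    by (rule PP_superset[OF fA _ assms(3)]) auto
  have e3: "PP n F' G m = (\<Sum>m1\<in>?A. \<Sum>m2\<in>wsupp G. \<Sum>j<n.
      if m = out m1 m2 (ej j) then F' m1 * G m2 * of_nat (snd m1 j * fst m2 j) else 0)"
    by (rule PP_superset[OF fA _ assms(3)]) auto
  have pw: "(if P then (a * x + b * y) * z * c else 0) = a * (if P then x * z * c else 0) + b * (if P then y * z * c else 0)"
    for P and x y z c :: complex by (simp add: algebra_simps)
  show ?thesis unfolding e1 e2 e3 pw by (simp add: sum.distrib sum_distrib_left)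
qed

lemma PP_lin2:
  assumes "finite (wsupp F)" "finite (wsupp G)" "finite (wsupp G')"
  shows "PP n F (\<lambda>m. a * G m + b * G' m) m = a * PP n F G m + b * PP n F G' m"
proof -
  let ?B = "wsupp G \<union> wsupp G'"
  have fB: "finite ?B" using assms by simp
  have e1: "PP n F (\<lambda>m. a * G m + b * G' m) m = (\<Sum>m1\<in>wsupp F. \<Sum>m2\<in>?B. \<Sum>j<n.
      if m = out m1 m2 (ej j) then F m1 * (a * G m2 + b * G' m2) * of_nat (snd m1 j * fst m2 j) else 0)"
    by (rule PP_superset[OF assms(1) _ fB wsupp_lin]) simp
  have e2: "PP n F G m = (\<Sum>m1\<in>wsupp F. \<Sum>m2\<in>?B. \<Sum>j<n.
      if m = out m1 m2 (ej j) then F m1 * G m2 * of_nat (snd m1 j * fst m2 j) else 0)"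
    by (rule PP_superset[OF assms(1) _ fB]) auto
  have e3: "PP n F G' m = (\<Sum>m1\<in>wsupp F. \<Sum>m2\<in>?B. \<Sum>j<n.
      if m = out m1 m2 (ej j) then F m1 * G' m2 * of_nat (snd m1 j * fst m2 j) else 0)"
    by (rule PP_superset[OF assms(1) _ fB]) auto
  have pw: "(if P then x * (a * y + b * z) * c else 0) = a * (if P then x * y * c else 0) + b * (if P then x * z * c else 0)"
    for P and x y z c :: complex by (simp add: algebra_simps)
  show ?thesis unfolding e1 e2 e3 pw by (simp add: sum.distrib sum_distrib_left)
qed

lemma pb_lin1:
  assumes "finite (wsupp F)" "finite (wsupp F')" "finite (wsupp G)"
  shows "pb n (\<lambda>m. a * F m + b * F' m) G m = a * pb n F G m + b * pb n F' G m"
  unfolding pb_def using PP_lin1[OF assms] PP_lin2[OF assms(3,1,2)]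
  by (simp add: algebra_simps)

lemma pb_lin2:
  assumes "finite (wsupp F)" "finite (wsupp G)" "finite (wsupp G')"
  shows "pb n F (\<lambda>m. a * G m + b * G' m) m = a * pb n F G m + b * pb n F G' m"
  unfolding pb_def using PP_lin2[OF assms] PP_lin1[OF assms(2,3,1)]
  by (simp add: algebra_simps)

lemma pb_self: "pb n F F m = 0" by (simp add: pb_def)
lemma pb_anti: "pb n G F m = - pb n F G m" by (simp add: pb_def)

lemma PP_supp_set: "wsupp (PP n F G) \<subseteq> (\<lambda>(m1,m2,j). out m1 m2 (ej j)) ` (wsupp F \<times> wsupp G \<times> {..<n})"
proof
  fix m assume "m \<in> wsupp (PP n F G)"
  hence "PP n F G m \<noteq> 0" by (simp add: wsupp_def)
  from PP_supp[OF this] obtain m1 m2 j where "m1\<in>wsupp F" "m2\<in>wsupp G" "j<n" "m = out m1 m2 (ej j)"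
    by blast
  thus "m \<in> (\<lambda>(m1,m2,j). out m1 m2 (ej j)) ` (wsupp F \<times> wsupp G \<times> {..<n})" by force
qed

lemma good_PP: assumes "good n F" "good n G" shows "good n (PP n F G)"
proof -
  have "finite ((\<lambda>(m1,m2,j). out m1 m2 (ej j)) ` (wsupp F \<times> wsupp G \<times> {..<n}))"
    using assms by (auto simp: good_def)
  moreover have "(\<lambda>(m1,m2,j). out m1 m2 (ej j)) ` (wsupp F \<times> wsupp G \<times> {..<n}) \<subseteq> Bn n"
    using assms out_Bn by (auto simp: good_def) blast
  ultimately show ?thesis using PP_supp_set[of n F G] unfolding good_def
    by (meson finite_subset subset_trans)
qed

lemma good_pb: assumes "good n F" "good n G" shows "good n (pb n F G)"
proof -
  have "wsupp (pb n F G) \<subseteq> wsupp (PP n F G) \<union> wsupp (PP n G F)"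
    by (auto simp: wsupp_def pb_def)
  thus ?thesis using good_PP[OF assms] good_PP[OF assms(2,1)] unfolding good_def
    by (meson finite_Un finite_subset le_sup_iff subset_trans)
qed

lemma good_scale: "good n F \<Longrightarrow> good n (\<lambda>m. c * F m)"
  unfolding good_def wsupp_def by (auto intro: finite_subset)

lemma good_topd: "good n F \<Longrightarrow> good n (topd d F)"
  unfolding good_def wsupp_def topd_def by (auto intro: finite_subset)

fun symb :: "nat \<Rightarrow> weyl \<Rightarrow> weyl \<Rightarrow> nat \<Rightarrow> weyl \<times> weyl" where
  "symb n S T 0 = (S, T)"
| "symb n S T (Suc l) = (let (A, B) = symb n S T l; C = (\<lambda>m. 2 * \<i> * pb n A B m) in (pb n A C, pb n B C))"

definition INV :: "nat \<Rightarrow> nat \<Rightarrow> weyl \<Rightarrow> weyl \<Rightarrow> weyl \<Rightarrow> weyl \<Rightarrow> bool" where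
  "INV n d y1 y2 A B \<longleftrightarrow> good n y1 \<and> good n y2 \<and> degle d y1 \<and> degle d y2 \<and> good n A \<and> good n B \<and>
     topd d y1 = (\<lambda>m. \<i> * (A m + B m)) \<and> topd d y2 = (\<lambda>m. B m - A m)"

lemma INV_step:
  assumes "INV n d y1 y2 A B" "d \<ge> 2"
  shows "INV n (d + (d + d - 2) - 2) (wcomm y1 (wcomm y1 y2)) (wcomm y2 (wcomm y1 y2))
     (pb n A (\<lambda>m. 2 * \<i> * pb n A B m)) (pb n B (\<lambda>m. 2 * \<i> * pb n A B m))"
proof -
  have I: "good n y1" "good n y2" "degle d y1" "degle d y2" "good n A" "good n B"
    "topd d y1 = (\<lambda>m. \<i> * (A m + B m))" "topd d y2 = (\<lambda>m. B m - A m)"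
    using assms(1) by (auto simp: INV_def)
  have fA: "finite (wsupp A)" and fB: "finite (wsupp B)" using I by (auto simp: good_def)
  define C where "C = (\<lambda>m. 2 * \<i> * pb n A B m)"
  have gC: "good n C" unfolding C_def by (rule good_scale, rule good_pb) (use I in auto)
  have fC: "finite (wsupp C)" using gC by (simp add: good_def)
  let ?c = "wcomm y1 y2"
  have c1: "good n ?c" "degle (d + d - 2) ?c" "topd (d + d - 2) ?c = pb n (topd d y1) (topd d y2)"
    using wcomm_main[OF I(1,3) I(2,4)] assms(2) by auto
  have e1: "(\<lambda>m. \<i> * (A m + B m)) = (\<lambda>m. \<i> * A m + \<i> * B m)" by (simp add: algebra_simps)
  have e2: "(\<lambda>m. B m - A m) = (\<lambda>m. 1 * B m + (-1) * A m)" by simp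
  have fBA: "finite (wsupp (\<lambda>m. 1 * B m + (-1) * A m))"
    using wsupp_lin[of 1 B "-1" A] fA fB finite_subset by blast
  have tc: "topd (d + d - 2) ?c = C"
  proof
    fix m
    have "pb n (\<lambda>m. \<i> * A m + \<i> * B m) (\<lambda>m. 1 * B m + (-1) * A m) m
       = \<i> * pb n A (\<lambda>m. 1 * B m + (-1) * A m) m + \<i> * pb n B (\<lambda>m. 1 * B m + (-1) * A m) m"
      by (rule pb_lin1[OF fA fB fBA])
    also have "\<dots> = \<i> * (pb n A B m - pb n A A m) + \<i> * (pb n B B m - pb n B A m)"
    proof -
      have l1: "pb n A (\<lambda>m. 1 * B m + (-1) * A m) m = 1 * pb n A B m + (-1) * pb n A A m"
        by (rule pb_lin2[OF fA fB fA])
      have l2: "pb n B (\<lambda>m. 1 * B m + (-1) * A m) m = 1 * pb n B B m + (-1) * pb n B A m"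
        by (rule pb_lin2[OF fB fB fA])
      show ?thesis unfolding l1 l2 by (simp add: algebra_simps)
    qed
    also have "\<dots> = C m" unfolding C_def pb_self pb_anti[of n B A] by simp
    finally have "pb n (\<lambda>m. \<i> * A m + \<i> * B m) (\<lambda>m. 1 * B m + (-1) * A m) m = C m" .
    thus "topd (d + d - 2) ?c m = C m" unfolding c1(3) I(7,8) e1 e2 .
  qed
  have dle: "d + (d + d - 2) \<ge> 2" using assms(2) by simp
  have n1: "good n (wcomm y1 ?c)" "degle (d + (d + d - 2) - 2) (wcomm y1 ?c)"
    "topd (d + (d + d - 2) - 2) (wcomm y1 ?c) = pb n (topd d y1) (topd (d + d - 2) ?c)"
    using wcomm_main[OF I(1,3) c1(1,2) dle] by auto
  have n2: "good n (wcomm y2 ?c)" "degle (d + (d + d - 2) - 2) (wcomm y2 ?c)"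
    "topd (d + (d + d - 2) - 2) (wcomm y2 ?c) = pb n (topd d y2) (topd (d + d - 2) ?c)"
    using wcomm_main[OF I(2,4) c1(1,2) dle] by auto
  have t1: "topd (d + (d + d - 2) - 2) (wcomm y1 ?c) = (\<lambda>m. \<i> * (pb n A C m + pb n B C m))"
  proof
    fix m
    have "pb n (\<lambda>m. \<i> * A m + \<i> * B m) C m = \<i> * pb n A C m + \<i> * pb n B C m"
      by (rule pb_lin1[OF fA fB fC])
    thus "topd (d + (d + d - 2) - 2) (wcomm y1 ?c) m = \<i> * (pb n A C m + pb n B C m)"
      unfolding n1(3) tc I(7) e1 by (simp add: distrib_left)
  qed
  have t2: "topd (d + (d + d - 2) - 2) (wcomm y2 ?c) = (\<lambda>m. pb n B C m - pb n A C m)"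
  proof
    fix m
    have "pb n (\<lambda>m. 1 * B m + (-1) * A m) C m = 1 * pb n B C m + (-1) * pb n A C m"
      by (rule pb_lin1[OF fB fA fC])
    thus "topd (d + (d + d - 2) - 2) (wcomm y2 ?c) m = pb n B C m - pb n A C m"
      unfolding n2(3) tc I(8) e2 by simp
  qed
  have gA': "good n (pb n A C)" "good n (pb n B C)" using good_pb I gC by auto
  show ?thesis unfolding INV_def C_def[symmetric]
    using n1 n2 t1 t2 gA' by auto
qed

lemma INV_all:
  assumes "INV n d p q S T" "d \<ge> 2"
  shows "INV n (3 ^ l * (d - 2) + 2) (fst (chain2 p q l)) (snd (chain2 p q l))
     (fst (symb n S T l)) (snd (symb n S T l))"
proof (induction l)
  case 0
  have "3 ^ 0 * (d - 2) + 2 = d" using assms(2) by simp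
  thus ?case using assms(1) by simp
next
  case (Suc l)
  obtain y1 y2 where y: "chain2 p q l = (y1, y2)" by (cases "chain2 p q l")
  obtain A B where ab: "symb n S T l = (A, B)" by (cases "symb n S T l")
  let ?d = "3 ^ l * (d - 2) + 2"
  have X: "INV n (?d + (?d + ?d - 2) - 2) (wcomm y1 (wcomm y1 y2)) (wcomm y2 (wcomm y1 y2))
     (pb n A (\<lambda>m. 2 * \<i> * pb n A B m)) (pb n B (\<lambda>m. 2 * \<i> * pb n A B m))"
    by (rule INV_step) (use Suc y ab in auto)
  have deq: "?d + (?d + ?d - 2) - 2 = 3 ^ Suc l * (d - 2) + 2"
  proof -
    define e where "e = 3 ^ l * (d - 2)"
    have a: "?d = e + 2" by (simp add: e_def)
    have b: "3 ^ Suc l * (d - 2) = 3 * e" by (simp add: e_def)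
    show ?thesis unfolding a b by linarith
  qed
  have X2: "INV n (3 ^ Suc l * (d - 2) + 2) (wcomm y1 (wcomm y1 y2)) (wcomm y2 (wcomm y1 y2))
     (pb n A (\<lambda>m. 2 * \<i> * pb n A B m)) (pb n B (\<lambda>m. 2 * \<i> * pb n A B m))"
    using X unfolding deq .
  have c: "chain2 p q (Suc l) = (wcomm y1 (wcomm y1 y2), wcomm y2 (wcomm y1 y2))" using y by (simp add: Let_def)
  have sy: "symb n S T (Suc l) = (pb n A (\<lambda>m. 2 * \<i> * pb n A B m), pb n B (\<lambda>m. 2 * \<i> * pb n A B m))"
    unfolding symb.simps ab Let_def prod.case by (rule refl)
  show ?case unfolding c sy fst_conv snd_conv by (rule X2)
qed


section \<open>Polynomial part\<close>

definition lin :: "int \<Rightarrow> complex poly" where "lin d = [:1, of_int d:]"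
definition pii :: "nat \<Rightarrow> (nat \<Rightarrow> int) \<Rightarrow> (nat \<Rightarrow> nat) \<Rightarrow> complex poly" where
  "pii n \<delta> c = (\<Prod>j<n. lin (\<delta> j) ^ c j)"

lemma lin_nz: "lin d \<noteq> 0" by (simp add: lin_def)
lemma pderiv_lin: "pderiv (lin d) = [:of_int d:]" by (simp add: lin_def pderiv_pCons)
lemma degree_lin: "degree (lin d) = (if d = 0 then 0 else 1)" by (simp add: lin_def)

lemma pii_add: "pii n \<delta> (\<lambda>j. a j + b j) = pii n \<delta> a * pii n \<delta> b"
  by (simp add: pii_def power_add prod.distrib)

lemma pii_nz: "pii n \<delta> c \<noteq> 0"
  by (simp add: pii_def lin_nz)

lemma pii_cong: "(\<And>j. j < n \<Longrightarrow> a j = b j) \<Longrightarrow> pii n \<delta> a = pii n \<delta> b"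
  by (simp add: pii_def)

lemma degree_pii: "degree (pii n \<delta> c) = (\<Sum>j<n. if \<delta> j = 0 then 0 else c j)"
proof -
  have "degree (pii n \<delta> c) = (\<Sum>j<n. degree (lin (\<delta> j) ^ c j))"
    unfolding pii_def by (rule degree_prod_eq_sum_degree) (simp add: lin_nz)
  also have "\<dots> = (\<Sum>j<n. if \<delta> j = 0 then 0 else c j)"
    by (rule sum.cong) (auto simp: degree_power_eq lin_nz degree_lin)
  finally show ?thesis .
qed

lemma pderiv_pii:
  "pderiv (pii n \<delta> c) = (\<Sum>a<n. smult (of_int (\<delta> a) * of_nat (c a)) (pii n \<delta> (\<lambda>i. c i - ej a i)))"
proof -
  have "pderiv (pii n \<delta> c) = (\<Sum>a\<in>{..<n}. (\<Prod>j\<in>{..<n} - {a}. lin (\<delta> j) ^ c j) * pderiv (lin (\<delta> a) ^ c a))"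
    unfolding pii_def by (rule pderiv_prod)
  also have "\<dots> = (\<Sum>a<n. smult (of_int (\<delta> a) * of_nat (c a)) (pii n \<delta> (\<lambda>i. c i - ej a i)))"
  proof (rule sum.cong[OF refl])
    fix a assume a: "a \<in> {..<n}"
    let ?R = "\<Prod>j\<in>{..<n} - {a}. lin (\<delta> j) ^ c j"
    have R: "(\<Prod>j\<in>{..<n} - {a}. lin (\<delta> j) ^ (c j - ej a j)) = ?R"
      by (rule prod.cong) (auto simp: ej_def)
    have p: "pii n \<delta> (\<lambda>i. c i - ej a i) = lin (\<delta> a) ^ (c a - 1) * ?R"
      unfolding pii_def using a R by (simp add: prod.remove ej_def)
    show "?R * pderiv (lin (\<delta> a) ^ c a) = smult (of_int (\<delta> a) * of_nat (c a)) (pii n \<delta> (\<lambda>i. c i - ej a i))"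
    proof (cases "c a")
      case 0 thus ?thesis by simp
    next
      case (Suc k)
      have "pderiv (lin (\<delta> a) ^ c a) = smult (of_nat (Suc k)) (lin (\<delta> a) ^ k) * [:of_int (\<delta> a):]"
        unfolding Suc by (simp only: pderiv_power_Suc pderiv_lin)
      also have "\<dots> = smult (of_int (\<delta> a) * of_nat (Suc k)) (lin (\<delta> a) ^ k)"
        by (simp add: mult.commute)
      finally show ?thesis unfolding p using Suc by (simp add: mult.commute)
    qed
  qed
  finally show ?thesis .
qed

lemma swap3:
  "(\<Sum>x\<in>Oset. \<Sum>a\<in>A. \<Sum>b\<in>B. \<Sum>c\<in>C. f x a b c) = (\<Sum>a\<in>A. \<Sum>b\<in>B. \<Sum>c\<in>C. \<Sum>x\<in>Oset. (f x a b c :: 'z::comm_monoid_add))"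
  apply (rule trans[OF sum.swap])
  apply (rule sum.cong[OF refl])
  apply (rule trans[OF sum.swap])
  apply (rule sum.cong[OF refl])
  apply (rule sum.swap)
  done

lemma sum_PP_smult:
  assumes O: "finite Oset" "\<And>m1 m2 j. m1 \<in> wsupp F \<Longrightarrow> m2 \<in> wsupp G \<Longrightarrow> j < n \<Longrightarrow> out m1 m2 (ej j) \<in> Oset"
  shows "(\<Sum>m\<in>Oset. smult (PP n F G m) (\<phi> m)) = (\<Sum>m1\<in>wsupp F. \<Sum>m2\<in>wsupp G. \<Sum>j<n.
     smult (F m1 * G m2 * of_nat (snd m1 j * fst m2 j)) (\<phi> (out m1 m2 (ej j))))"
proof -
  have "(\<Sum>m\<in>Oset. smult (PP n F G m) (\<phi> m)) = (\<Sum>m\<in>Oset. \<Sum>m1\<in>wsupp F. \<Sum>m2\<in>wsupp G. \<Sum>j<n.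
     smult (if m = out m1 m2 (ej j) then F m1 * G m2 * of_nat (snd m1 j * fst m2 j) else 0) (\<phi> m))"
    by (simp only: PP_def smult_sum)
  also have "\<dots> = (\<Sum>m1\<in>wsupp F. \<Sum>m2\<in>wsupp G. \<Sum>j<n. \<Sum>m\<in>Oset.
     smult (if m = out m1 m2 (ej j) then F m1 * G m2 * of_nat (snd m1 j * fst m2 j) else 0) (\<phi> m))"
    by (rule swap3)
  also have "\<dots> = (\<Sum>m1\<in>wsupp F. \<Sum>m2\<in>wsupp G. \<Sum>j<n.
     smult (F m1 * G m2 * of_nat (snd m1 j * fst m2 j)) (\<phi> (out m1 m2 (ej j))))"
  proof (intro sum.cong refl)
    fix m1 m2 j assume h: "m1 \<in> wsupp F" "m2 \<in> wsupp G" "j \<in> {..<n}"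
    have "(\<Sum>m\<in>Oset. smult (if m = out m1 m2 (ej j) then F m1 * G m2 * of_nat (snd m1 j * fst m2 j) else 0) (\<phi> m))
      = (\<Sum>m\<in>Oset. if m = out m1 m2 (ej j) then smult (F m1 * G m2 * of_nat (snd m1 j * fst m2 j)) (\<phi> (out m1 m2 (ej j))) else 0)"
      by (rule sum.cong) auto
    also have "\<dots> = smult (F m1 * G m2 * of_nat (snd m1 j * fst m2 j)) (\<phi> (out m1 m2 (ej j)))"
      using O h by (simp add: sum.delta')
    finally show "(\<Sum>m\<in>Oset. smult (if m = out m1 m2 (ej j) then F m1 * G m2 * of_nat (snd m1 j * fst m2 j) else 0) (\<phi> m))
      = smult (F m1 * G m2 * of_nat (snd m1 j * fst m2 j)) (\<phi> (out m1 m2 (ej j)))" .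
  qed
  finally show ?thesis .
qed


lemma smult_sumR: "smult a (sum f A) = (\<Sum>x\<in>A. smult a (f x))"
  by (induction A rule: infinite_finite_induct) (auto simp: smult_add_right)

lemma pderiv_sum: "pderiv (sum f A) = (\<Sum>x\<in>A. pderiv (f x))"
  by (induction A rule: infinite_finite_induct) (auto simp: pderiv_add)

definition Ev :: "nat \<Rightarrow> (nat \<Rightarrow> int) \<Rightarrow> (nat \<Rightarrow> nat) \<Rightarrow> weyl \<Rightarrow> complex poly" where
  "Ev n \<delta> x S = (\<Sum>m\<in>wsupp S. smult (S m) (pii n \<delta> (\<lambda>j. fst m j - x j)))"

definition shape :: "(nat \<Rightarrow> nat) \<Rightarrow> (nat \<Rightarrow> nat) \<Rightarrow> weyl \<Rightarrow> bool" where
  "shape x y S \<longleftrightarrow> (\<forall>m\<in>wsupp S. \<exists>c. m = (\<lambda>j. x j + c j, \<lambda>j. y j + c j))"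

lemma Ev_superset:
  assumes "finite A" "wsupp S \<subseteq> A"
  shows "Ev n \<delta> x S = (\<Sum>m\<in>A. smult (S m) (pii n \<delta> (\<lambda>j. fst m j - x j)))"
  unfolding Ev_def
proof (rule sum.mono_neutral_left)
  show "\<forall>i\<in>A - wsupp S. smult (S i) (pii n \<delta> (\<lambda>j. fst i j - x j)) = 0"
    by (auto simp: wsupp_def)
qed (use assms in auto)

lemma Ev_scale:
  assumes "finite (wsupp S)"
  shows "Ev n \<delta> x (\<lambda>m. c * S m) = smult c (Ev n \<delta> x S)"
proof -
  have "Ev n \<delta> x (\<lambda>m. c * S m) = (\<Sum>m\<in>wsupp S. smult (c * S m) (pii n \<delta> (\<lambda>j. fst m j - x j)))"
    by (rule Ev_superset) (use assms in \<open>auto simp: wsupp_def\<close>)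
  thus ?thesis unfolding Ev_def by (simp add: smult_sumR)
qed

lemma Ev_zero: "Ev n \<delta> x (\<lambda>_. 0) = 0" by (simp add: Ev_def wsupp_def)

lemma out_comm: "out m1 m2 k = out m2 m1 k" by (simp add: out_def add.commute)

lemma Ev_pb_gen:
  assumes gS: "good n S" and gG: "good n G"
  shows "Ev n \<delta> x (pb n S G) = (\<Sum>m1\<in>wsupp S. \<Sum>m2\<in>wsupp G. \<Sum>j<n.
     smult (S m1 * G m2 * (of_nat (snd m1 j * fst m2 j) - of_nat (snd m2 j * fst m1 j)))
       (pii n \<delta> (\<lambda>i. fst (out m1 m2 (ej j)) i - x i)))"
proof -
  have fS: "finite (wsupp S)" and fG: "finite (wsupp G)" using gS gG by (auto simp: good_def)
  define \<phi> where "\<phi> = (\<lambda>m::mono. pii n \<delta> (\<lambda>i. fst m i - x i))"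
  define OS where "OS = (\<lambda>(m1,m2,j). out m1 m2 (ej j)) ` (wsupp S \<times> wsupp G \<times> {..<n})"
  define OG where "OG = (\<lambda>(m1,m2,j). out m1 m2 (ej j)) ` (wsupp G \<times> wsupp S \<times> {..<n})"
  have fO: "finite (OS \<union> OG)" unfolding OS_def OG_def using fS fG by auto
  have sub: "wsupp (pb n S G) \<subseteq> OS \<union> OG"
  proof -
    have "wsupp (pb n S G) \<subseteq> wsupp (PP n S G) \<union> wsupp (PP n G S)" by (auto simp: wsupp_def pb_def)
    thus ?thesis using PP_supp_set[of n S G] PP_supp_set[of n G S] unfolding OS_def OG_def by blast
  qed
  have "Ev n \<delta> x (pb n S G) = (\<Sum>m\<in>OS \<union> OG. smult (pb n S G m) (\<phi> m))"
    unfolding \<phi>_def by (rule Ev_superset[OF fO sub])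
  also have "\<dots> = (\<Sum>m\<in>OS \<union> OG. smult (PP n S G m) (\<phi> m)) - (\<Sum>m\<in>OS \<union> OG. smult (PP n G S m) (\<phi> m))"
    by (simp add: pb_def smult_diff_left sum_subtractf)
  also have "(\<Sum>m\<in>OS \<union> OG. smult (PP n S G m) (\<phi> m)) = (\<Sum>m1\<in>wsupp S. \<Sum>m2\<in>wsupp G. \<Sum>j<n.
     smult (S m1 * G m2 * of_nat (snd m1 j * fst m2 j)) (\<phi> (out m1 m2 (ej j))))"
    by (rule sum_PP_smult[OF fO], unfold OS_def, rule UnI1, rule image_eqI[where x="(_,_,_)"]) auto
  also have "(\<Sum>m\<in>OS \<union> OG. smult (PP n G S m) (\<phi> m)) = (\<Sum>m1\<in>wsupp G. \<Sum>m2\<in>wsupp S. \<Sum>j<n.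
     smult (G m1 * S m2 * of_nat (snd m1 j * fst m2 j)) (\<phi> (out m1 m2 (ej j))))"
    by (rule sum_PP_smult[OF fO], unfold OG_def, rule UnI2, rule image_eqI[where x="(_,_,_)"]) auto
  also have "\<dots> = (\<Sum>m2\<in>wsupp S. \<Sum>m1\<in>wsupp G. \<Sum>j<n.
     smult (G m1 * S m2 * of_nat (snd m1 j * fst m2 j)) (\<phi> (out m1 m2 (ej j))))"
    by (rule sum.swap)
  also have "\<dots> = (\<Sum>m1\<in>wsupp S. \<Sum>m2\<in>wsupp G. \<Sum>j<n.
     smult (S m1 * G m2 * of_nat (snd m2 j * fst m1 j)) (\<phi> (out m1 m2 (ej j))))"
    by (intro sum.cong refl) (simp add: out_comm[of _ _ "ej _"] mult.commute)
  finally show ?thesis unfolding \<phi>_def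
    by (simp add: right_diff_distrib smult_diff_left sum_subtractf)
qed


lemma coef_complex: "(of_nat a - of_nat b :: complex) = of_int (int a - int b)" by simp

lemma coreG:
  fixes x y ca cb :: "nat \<Rightarrow> nat" and s :: int
  assumes sd: "\<And>j. int (x j) - int (y j) = s * \<delta> j"
  shows "(\<Sum>j<n. smult (of_nat ((y j + ca j) * cb j) - of_nat (cb j * (x j + ca j)))
            (pii n \<delta> (\<lambda>i. x i + ca i + cb i - ej j i - x i)))
     = smult (- of_int s) (pii n \<delta> ca * pderiv (pii n \<delta> cb))"
proof -
  have "smult (- of_int s) (pii n \<delta> ca * pderiv (pii n \<delta> cb)) =
     (\<Sum>j<n. smult (- of_int s * (of_int (\<delta> j) * of_nat (cb j))) (pii n \<delta> ca * pii n \<delta> (\<lambda>i. cb i - ej j i)))"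
    by (simp add: pderiv_pii sum_distrib_left smult_sumR)
  also have "\<dots> = (\<Sum>j<n. smult (- of_int s * (of_int (\<delta> j) * of_nat (cb j))) (pii n \<delta> (\<lambda>i. ca i + (cb i - ej j i))))"
    by (simp add: pii_add)
  also have "\<dots> = (\<Sum>j<n. smult (of_nat ((y j + ca j) * cb j) - of_nat (cb j * (x j + ca j)))
            (pii n \<delta> (\<lambda>i. x i + ca i + cb i - ej j i - x i)))"
  proof (rule sum.cong[OF refl])
    fix j assume j: "j \<in> {..<n}"
    show "smult (- of_int s * (of_int (\<delta> j) * of_nat (cb j))) (pii n \<delta> (\<lambda>i. ca i + (cb i - ej j i))) =
       smult (of_nat ((y j + ca j) * cb j) - of_nat (cb j * (x j + ca j))) (pii n \<delta> (\<lambda>i. x i + ca i + cb i - ej j i - x i))"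
    proof (cases "cb j = 0")
      case True thus ?thesis by simp
    next
      case False
      have xi: "int (x j) = int (y j) + s * \<delta> j" using sd[of j] by simp
      have ie: "int ((y j + ca j) * cb j) - int (cb j * (x j + ca j)) = - s * (\<delta> j * int (cb j))"
        by (simp add: xi algebra_simps)
      have co: "(of_nat ((y j + ca j) * cb j) - of_nat (cb j * (x j + ca j)) :: complex)
          = - of_int s * (of_int (\<delta> j) * of_nat (cb j))"
        unfolding coef_complex ie by simp
      have pa: "pii n \<delta> (\<lambda>i. x i + ca i + cb i - ej j i - x i) = pii n \<delta> (\<lambda>i. ca i + (cb i - ej j i))"
        by (rule pii_cong) (use False in \<open>auto simp: ej_def\<close>)
      show ?thesis unfolding co pa ..
    qed
  qed
  finally show ?thesis by simp
qed

lemma coreST: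
  fixes xp xm ca cb :: "nat \<Rightarrow> nat"
  assumes sd: "\<And>j. int (xp j) - int (xm j) = \<delta> j"
  shows "(\<Sum>j<n. smult (of_nat ((xm j + ca j) * (xm j + cb j)) - of_nat ((xp j + cb j) * (xp j + ca j)))
            (pii n \<delta> (\<lambda>i. xp i + ca i + (xm i + cb i) - ej j i)))
     = - pderiv (pii n \<delta> (\<lambda>j. xp j + xm j) * pii n \<delta> ca * pii n \<delta> cb)"
proof -
  define w where "w = (\<lambda>i. xp i + ca i + (xm i + cb i))"
  have pw: "pii n \<delta> (\<lambda>j. xp j + xm j) * pii n \<delta> ca * pii n \<delta> cb = pii n \<delta> w"
  proof -
    have "pii n \<delta> (\<lambda>j. xp j + xm j) * pii n \<delta> ca * pii n \<delta> cb = pii n \<delta> (\<lambda>j. (xp j + xm j) + ca j + cb j)"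
      by (simp add: pii_add)
    also have "\<dots> = pii n \<delta> w" by (rule pii_cong) (simp add: w_def)
    finally show ?thesis .
  qed
  have "- pderiv (pii n \<delta> w) = (\<Sum>j<n. smult (- (of_int (\<delta> j) * of_nat (w j))) (pii n \<delta> (\<lambda>i. w i - ej j i)))"
    by (simp add: pderiv_pii sum_negf)
  also have "\<dots> = (\<Sum>j<n. smult (of_nat ((xm j + ca j) * (xm j + cb j)) - of_nat ((xp j + cb j) * (xp j + ca j)))
            (pii n \<delta> (\<lambda>i. xp i + ca i + (xm i + cb i) - ej j i)))"
  proof (rule sum.cong[OF refl])
    fix j
    have xi: "int (xp j) = int (xm j) + \<delta> j" using sd[of j] by simp
    have ie: "int ((xm j + ca j) * (xm j + cb j)) - int ((xp j + cb j) * (xp j + ca j)) = - (\<delta> j * int (w j))"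
      by (simp add: xi w_def algebra_simps)
    have co: "(of_nat ((xm j + ca j) * (xm j + cb j)) - of_nat ((xp j + cb j) * (xp j + ca j)) :: complex)
        = - (of_int (\<delta> j) * of_nat (w j))"
      unfolding coef_complex ie by simp
    show "smult (- (of_int (\<delta> j) * of_nat (w j))) (pii n \<delta> (\<lambda>i. w i - ej j i)) =
      smult (of_nat ((xm j + ca j) * (xm j + cb j)) - of_nat ((xp j + cb j) * (xp j + ca j)))
            (pii n \<delta> (\<lambda>i. xp i + ca i + (xm i + cb i) - ej j i))"
      unfolding co w_def ..
  qed
  finally show ?thesis unfolding pw by simp
qed


lemma Ev_pbG:
  assumes gS: "good n S" and gG: "good n G" and sS: "shape x y S" and sG: "shape (\<lambda>_. 0) (\<lambda>_. 0) G"
    and sd: "\<And>j. int (x j) - int (y j) = s * \<delta> j"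
  shows "Ev n \<delta> x (pb n S G) = smult (- of_int s) (Ev n \<delta> x S * pderiv (Ev n \<delta> (\<lambda>_. 0) G))"
proof -
  have inner: "(\<Sum>j<n. smult (S m1 * G m2 * (of_nat (snd m1 j * fst m2 j) - of_nat (snd m2 j * fst m1 j)))
       (pii n \<delta> (\<lambda>i. fst (out m1 m2 (ej j)) i - x i)))
     = smult (S m1 * G m2) (smult (- of_int s) (pii n \<delta> (\<lambda>j. fst m1 j - x j) * pderiv (pii n \<delta> (\<lambda>j. fst m2 j - 0))))"
    if h: "m1 \<in> wsupp S" "m2 \<in> wsupp G" for m1 m2
  proof -
    obtain c1 where m1: "m1 = (\<lambda>j. x j + c1 j, \<lambda>j. y j + c1 j)" using sS h(1) by (auto simp: shape_def)
    obtain c2 where m2: "m2 = (\<lambda>j. 0 + c2 j, \<lambda>j. 0 + c2 j)" using sG h(2) unfolding shape_def by blast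
    have e1: "(\<lambda>j. fst m1 j - x j) = c1" using m1 by auto
    have e2: "(\<lambda>j. fst m2 j - 0) = c2" using m2 by auto
    have "(\<Sum>j<n. smult (of_nat (snd m1 j * fst m2 j) - of_nat (snd m2 j * fst m1 j))
       (pii n \<delta> (\<lambda>i. fst (out m1 m2 (ej j)) i - x i))) = smult (- of_int s) (pii n \<delta> c1 * pderiv (pii n \<delta> c2))"
      using coreG[OF sd, where n=n and ca=c1 and cb=c2] by (simp add: m1 m2 out_def)
    moreover have "(\<Sum>j<n. smult (S m1 * G m2 * (of_nat (snd m1 j * fst m2 j) - of_nat (snd m2 j * fst m1 j)))
       (pii n \<delta> (\<lambda>i. fst (out m1 m2 (ej j)) i - x i))) = smult (S m1 * G m2) (\<Sum>j<n. smult (of_nat (snd m1 j * fst m2 j) - of_nat (snd m2 j * fst m1 j))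
       (pii n \<delta> (\<lambda>i. fst (out m1 m2 (ej j)) i - x i)))"
      by (simp only: smult_sumR smult_smult)
    ultimately show ?thesis unfolding e1 e2 by simp
  qed
  have "Ev n \<delta> x (pb n S G) = (\<Sum>m1\<in>wsupp S. \<Sum>m2\<in>wsupp G.
     smult (S m1 * G m2) (smult (- of_int s) (pii n \<delta> (\<lambda>j. fst m1 j - x j) * pderiv (pii n \<delta> (\<lambda>j. fst m2 j - 0)))))"
    unfolding Ev_pb_gen[OF gS gG] by (intro sum.cong refl inner)
  also have "\<dots> = smult (- of_int s) (Ev n \<delta> x S * pderiv (Ev n \<delta> (\<lambda>_. 0) G))"
    unfolding Ev_def pderiv_sum pderiv_smult sum_product smult_sumR
    by (intro sum.cong refl) (simp add: mult.commute mult.left_commute)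
  finally show ?thesis .
qed

lemma Ev_pbST:
  assumes gS: "good n S" and gT: "good n T" and sS: "shape xp xm S" and sT: "shape xm xp T"
    and sd: "\<And>j. int (xp j) - int (xm j) = \<delta> j"
  shows "Ev n \<delta> (\<lambda>_. 0) (pb n S T) = - pderiv (pii n \<delta> (\<lambda>j. xp j + xm j) * Ev n \<delta> xp S * Ev n \<delta> xm T)"
proof -
  let ?Q = "pii n \<delta> (\<lambda>j. xp j + xm j)"
  have inner: "(\<Sum>j<n. smult (S m1 * T m2 * (of_nat (snd m1 j * fst m2 j) - of_nat (snd m2 j * fst m1 j)))
       (pii n \<delta> (\<lambda>i. fst (out m1 m2 (ej j)) i - 0)))
     = smult (S m1 * T m2) (- pderiv (?Q * pii n \<delta> (\<lambda>j. fst m1 j - xp j) * pii n \<delta> (\<lambda>j. fst m2 j - xm j)))"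
    if h: "m1 \<in> wsupp S" "m2 \<in> wsupp T" for m1 m2
  proof -
    obtain c1 where m1: "m1 = (\<lambda>j. xp j + c1 j, \<lambda>j. xm j + c1 j)" using sS h(1) by (auto simp: shape_def)
    obtain c2 where m2: "m2 = (\<lambda>j. xm j + c2 j, \<lambda>j. xp j + c2 j)" using sT h(2) by (auto simp: shape_def)
    have e1: "(\<lambda>j. fst m1 j - xp j) = c1" using m1 by auto
    have e2: "(\<lambda>j. fst m2 j - xm j) = c2" using m2 by auto
    have "(\<Sum>j<n. smult (of_nat (snd m1 j * fst m2 j) - of_nat (snd m2 j * fst m1 j))
       (pii n \<delta> (\<lambda>i. fst (out m1 m2 (ej j)) i - 0))) = - pderiv (?Q * pii n \<delta> c1 * pii n \<delta> c2)"
      using coreST[OF sd, where n=n and ca=c1 and cb=c2] by (simp add: m1 m2 out_def)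
    moreover have "(\<Sum>j<n. smult (S m1 * T m2 * (of_nat (snd m1 j * fst m2 j) - of_nat (snd m2 j * fst m1 j)))
       (pii n \<delta> (\<lambda>i. fst (out m1 m2 (ej j)) i - 0))) = smult (S m1 * T m2) (\<Sum>j<n. smult (of_nat (snd m1 j * fst m2 j) - of_nat (snd m2 j * fst m1 j))
       (pii n \<delta> (\<lambda>i. fst (out m1 m2 (ej j)) i - 0)))"
      by (simp only: smult_sumR smult_smult)
    ultimately show ?thesis unfolding e1 e2 by simp
  qed
  have "Ev n \<delta> (\<lambda>_. 0) (pb n S T) = (\<Sum>m1\<in>wsupp S. \<Sum>m2\<in>wsupp T.
     smult (S m1 * T m2) (- pderiv (?Q * pii n \<delta> (\<lambda>j. fst m1 j - xp j) * pii n \<delta> (\<lambda>j. fst m2 j - xm j))))"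
    unfolding Ev_pb_gen[OF gS gT] by (intro sum.cong refl inner)
  also have "\<dots> = - pderiv (?Q * Ev n \<delta> xp S * Ev n \<delta> xm T)"
  proof -
    have "?Q * Ev n \<delta> xp S * Ev n \<delta> xm T = ?Q * (Ev n \<delta> xp S * Ev n \<delta> xm T)" by (simp only: mult.assoc)
    also have "\<dots> = (\<Sum>m1\<in>wsupp S. \<Sum>m2\<in>wsupp T. ?Q * (smult (S m1) (pii n \<delta> (\<lambda>j. fst m1 j - xp j)) *
         smult (T m2) (pii n \<delta> (\<lambda>j. fst m2 j - xm j))))"
      by (simp only: Ev_def sum_product) (simp only: sum_distrib_left)
    also have "\<dots> = (\<Sum>m1\<in>wsupp S. \<Sum>m2\<in>wsupp T. smult (S m1 * T m2) (?Q * pii n \<delta> (\<lambda>j. fst m1 j - xp j) *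
         pii n \<delta> (\<lambda>j. fst m2 j - xm j)))"
      by (intro sum.cong refl) (simp add: mult_ac)
    finally have "?Q * Ev n \<delta> xp S * Ev n \<delta> xm T = \<dots>" .
    thus ?thesis by (simp add: pderiv_sum pderiv_smult sum_negf)
  qed
  finally show ?thesis .
qed

lemma shape_scale: "shape x y S \<Longrightarrow> shape x y (\<lambda>m. c * S m)"
  by (auto simp: shape_def wsupp_def)

lemma pb_nz_cases:
  assumes "m \<in> wsupp (pb n F G)"
  obtains m1 m2 j where "m1\<in>wsupp F" "m2\<in>wsupp G" "j<n" "m = out m1 m2 (ej j)" "snd m1 j * fst m2 j \<noteq> 0"
    | m1 m2 j where "m1\<in>wsupp G" "m2\<in>wsupp F" "j<n" "m = out m1 m2 (ej j)" "snd m1 j * fst m2 j \<noteq> 0"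
proof -
  have "PP n F G m \<noteq> 0 \<or> PP n G F m \<noteq> 0" using assms by (auto simp: wsupp_def pb_def)
  thus ?thesis using PP_supp that by blast
qed

lemma shape_pbG:
  assumes sS: "shape x y S" and sG: "shape (\<lambda>_. 0) (\<lambda>_. 0) G"
  shows "shape x y (pb n S G)"
  unfolding shape_def
proof
  fix m assume m: "m \<in> wsupp (pb n S G)"
  show "\<exists>c. m = (\<lambda>j. x j + c j, \<lambda>j. y j + c j)"
  proof (cases rule: pb_nz_cases[OF m])
    case (1 m1 m2 j)
    obtain c1 where m1: "m1 = (\<lambda>j. x j + c1 j, \<lambda>j. y j + c1 j)" using sS 1 by (auto simp: shape_def)
    obtain c2 where m2: "m2 = (\<lambda>j. 0 + c2 j, \<lambda>j. 0 + c2 j)" using sG 1 unfolding shape_def by blast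
    have c2: "c2 j \<noteq> 0" using 1 m2 by simp
    have mm: "m = (\<lambda>i. x i + (c1 i + c2 i - ej j i), \<lambda>i. y i + (c1 i + c2 i - ej j i))"
      using 1 m1 m2 c2 by (auto simp: out_def ej_def fun_eq_iff)
    show ?thesis by (rule exI[where x="\<lambda>i. c1 i + c2 i - ej j i"], rule mm)
  next
    case (2 m1 m2 j)
    obtain c1 where m2: "m2 = (\<lambda>j. x j + c1 j, \<lambda>j. y j + c1 j)" using sS 2 by (auto simp: shape_def)
    obtain c2 where m1: "m1 = (\<lambda>j. 0 + c2 j, \<lambda>j. 0 + c2 j)" using sG 2 unfolding shape_def by blast
    have c2: "c2 j \<noteq> 0" using 2 m1 by simp
    have mm: "m = (\<lambda>i. x i + (c1 i + c2 i - ej j i), \<lambda>i. y i + (c1 i + c2 i - ej j i))"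
      using 2 m1 m2 c2 by (auto simp: out_def ej_def fun_eq_iff)
    show ?thesis by (rule exI[where x="\<lambda>i. c1 i + c2 i - ej j i"], rule mm)
  qed
qed

lemma shape_pbST:
  assumes sS: "shape xp xm S" and sT: "shape xm xp T"
  shows "shape (\<lambda>_. 0) (\<lambda>_. 0) (pb n S T)"
  unfolding shape_def
proof
  fix m assume m: "m \<in> wsupp (pb n S T)"
  show "\<exists>c. m = (\<lambda>j. 0 + c j, \<lambda>j. 0 + c j)"
  proof (cases rule: pb_nz_cases[OF m])
    case (1 m1 m2 j)
    obtain c1 where m1: "m1 = (\<lambda>j. xp j + c1 j, \<lambda>j. xm j + c1 j)" using sS 1 by (auto simp: shape_def)
    obtain c2 where m2: "m2 = (\<lambda>j. xm j + c2 j, \<lambda>j. xp j + c2 j)" using sT 1 by (auto simp: shape_def)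
    have mm: "m = (\<lambda>i. 0 + (xp i + c1 i + (xm i + c2 i) - ej j i), \<lambda>i. 0 + (xp i + c1 i + (xm i + c2 i) - ej j i))"
      using 1 m1 m2 by (auto simp: out_def fun_eq_iff)
    show ?thesis by (rule exI[where x="\<lambda>i. xp i + c1 i + (xm i + c2 i) - ej j i"], rule mm)
  next
    case (2 m1 m2 j)
    obtain c1 where m2: "m2 = (\<lambda>j. xp j + c1 j, \<lambda>j. xm j + c1 j)" using sS 2 by (auto simp: shape_def)
    obtain c2 where m1: "m1 = (\<lambda>j. xm j + c2 j, \<lambda>j. xp j + c2 j)" using sT 2 by (auto simp: shape_def)
    have mm: "m = (\<lambda>i. 0 + (xp i + c1 i + (xm i + c2 i) - ej j i), \<lambda>i. 0 + (xp i + c1 i + (xm i + c2 i) - ej j i))"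
      using 2 m1 m2 by (auto simp: out_def fun_eq_iff)
    show ?thesis by (rule exI[where x="\<lambda>i. xp i + c1 i + (xm i + c2 i) - ej j i"], rule mm)
  qed
qed


lemma good_supp_fin: "good n F \<Longrightarrow> finite (wsupp F)" by (simp add: good_def)

lemma symb_step:
  assumes sd: "\<And>j. int (xp j) - int (xm j) = \<delta> j"
    and gA: "good n A" and gB: "good n B" and sA: "shape xp xm A" and sB: "shape xm xp B"
    and nA: "Ev n \<delta> xp A \<noteq> 0" and nB: "Ev n \<delta> xm B \<noteq> 0"
    and dg: "2 \<le> degree (pii n \<delta> (\<lambda>j. xp j + xm j)) + degree (Ev n \<delta> xp A) + degree (Ev n \<delta> xm B)"
  shows "good n (pb n A (\<lambda>m. 2 * \<i> * pb n A B m)) \<and> good n (pb n B (\<lambda>m. 2 * \<i> * pb n A B m)) \<and>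
    shape xp xm (pb n A (\<lambda>m. 2 * \<i> * pb n A B m)) \<and> shape xm xp (pb n B (\<lambda>m. 2 * \<i> * pb n A B m)) \<and>
    Ev n \<delta> xp (pb n A (\<lambda>m. 2 * \<i> * pb n A B m)) \<noteq> 0 \<and> Ev n \<delta> xm (pb n B (\<lambda>m. 2 * \<i> * pb n A B m)) \<noteq> 0 \<and>
    2 \<le> degree (pii n \<delta> (\<lambda>j. xp j + xm j)) + degree (Ev n \<delta> xp (pb n A (\<lambda>m. 2 * \<i> * pb n A B m)))
       + degree (Ev n \<delta> xm (pb n B (\<lambda>m. 2 * \<i> * pb n A B m)))"
proof -
  define C where "C = (\<lambda>m. 2 * \<i> * pb n A B m)"
  have gAB: "good n (pb n A B)" by (rule good_pb[OF gA gB])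
  have gC: "good n C" unfolding C_def by (rule good_scale[OF gAB])
  have sC: "shape (\<lambda>_. 0) (\<lambda>_. 0) C" unfolding C_def by (rule shape_scale, rule shape_pbST[OF sA sB])
  define Q where "Q = pii n \<delta> (\<lambda>j. xp j + xm j)"
  define F where "F = Ev n \<delta> xp A"
  define G where "G = Ev n \<delta> xm B"
  define H where "H = Q * F * G"
  have EC: "Ev n \<delta> (\<lambda>_. 0) C = smult (2 * \<i>) (- pderiv H)"
    unfolding C_def Ev_scale[OF good_supp_fin[OF gAB]] Ev_pbST[OF gA gB sA sB sd] H_def Q_def F_def G_def ..
  have pEC: "pderiv (Ev n \<delta> (\<lambda>_. 0) C) = smult (- 2 * \<i>) (pderiv (pderiv H))"
    unfolding EC by (simp add: pderiv_smult pderiv_minus)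
  have sd1: "\<And>j. int (xp j) - int (xm j) = 1 * \<delta> j" using sd by simp
  have sd2: "\<And>j. int (xm j) - int (xp j) = (-1) * \<delta> j" using sd by (simp add: algebra_simps)
  have F': "Ev n \<delta> xp (pb n A C) = smult (- 1) (F * pderiv (Ev n \<delta> (\<lambda>_. 0) C))"
    unfolding F_def using Ev_pbG[OF gA gC sA sC sd1] by simp
  have G': "Ev n \<delta> xm (pb n B C) = smult 1 (G * pderiv (Ev n \<delta> (\<lambda>_. 0) C))"
    unfolding G_def using Ev_pbG[OF gB gC sB sC sd2] by simp
  have Qnz: "Q \<noteq> 0" unfolding Q_def by (rule pii_nz)
  have Fnz: "F \<noteq> 0" and Gnz: "G \<noteq> 0" using nA nB by (auto simp: F_def G_def)
  have Hnz: "H \<noteq> 0" unfolding H_def using Qnz Fnz Gnz by simp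
  have dH: "degree H = degree Q + degree F + degree G"
    unfolding H_def using Qnz Fnz Gnz by (simp add: degree_mult_eq)
  have dH2: "degree H \<ge> 2" using dH dg by (simp add: Q_def F_def G_def)
  have P2nz: "pderiv (pderiv H) \<noteq> 0"
  proof
    assume "pderiv (pderiv H) = 0"
    hence "degree (pderiv H) = 0" by (simp add: pderiv_eq_0_iff)
    hence "degree H - 1 = 0" by (simp add: degree_pderiv)
    thus False using dH2 by simp
  qed
  have dP2: "degree (pderiv (pderiv H)) = degree H - 2" by (simp add: degree_pderiv)
  have pECnz: "pderiv (Ev n \<delta> (\<lambda>_. 0) C) \<noteq> 0" unfolding pEC using P2nz by simp
  have dpEC: "degree (pderiv (Ev n \<delta> (\<lambda>_. 0) C)) = degree H - 2" unfolding pEC using dP2 by simp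
  have n1: "Ev n \<delta> xp (pb n A C) \<noteq> 0" unfolding F' using Fnz pECnz by simp
  have n2: "Ev n \<delta> xm (pb n B C) \<noteq> 0" unfolding G' using Gnz pECnz by simp
  have d1: "degree (Ev n \<delta> xp (pb n A C)) = degree F + (degree H - 2)"
    unfolding F' using Fnz pECnz dpEC by (simp add: degree_mult_eq)
  have d2: "degree (Ev n \<delta> xm (pb n B C)) = degree G + (degree H - 2)"
    unfolding G' using Gnz pECnz dpEC by (simp add: degree_mult_eq)
  have "2 \<le> degree Q + degree (Ev n \<delta> xp (pb n A C)) + degree (Ev n \<delta> xm (pb n B C))"
    using d1 d2 dg by (simp add: Q_def F_def G_def)
  moreover have "good n (pb n A C)" "good n (pb n B C)" using good_pb gA gB gC by auto
  moreover have "shape xp xm (pb n A C)" "shape xm xp (pb n B C)"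
    using shape_pbG[OF sA sC] shape_pbG[OF sB sC] by auto
  ultimately show ?thesis using n1 n2 unfolding C_def Q_def by auto
qed

definition INV2 :: "nat \<Rightarrow> (nat \<Rightarrow> int) \<Rightarrow> (nat \<Rightarrow> nat) \<Rightarrow> (nat \<Rightarrow> nat) \<Rightarrow> weyl \<Rightarrow> weyl \<Rightarrow> bool" where
  "INV2 n \<delta> xp xm A B \<longleftrightarrow> good n A \<and> good n B \<and> shape xp xm A \<and> shape xm xp B \<and>
     Ev n \<delta> xp A \<noteq> 0 \<and> Ev n \<delta> xm B \<noteq> 0 \<and>
     2 \<le> degree (pii n \<delta> (\<lambda>j. xp j + xm j)) + degree (Ev n \<delta> xp A) + degree (Ev n \<delta> xm B)"

lemma INV2_all:
  assumes sd: "\<And>j. int (xp j) - int (xm j) = \<delta> j" and I0: "INV2 n \<delta> xp xm S T"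
  shows "INV2 n \<delta> xp xm (fst (symb n S T l)) (snd (symb n S T l))"
proof (induction l)
  case 0 thus ?case using I0 by simp
next
  case (Suc l)
  obtain A B where ab: "symb n S T l = (A, B)" by (cases "symb n S T l")
  have sy: "symb n S T (Suc l) = (pb n A (\<lambda>m. 2 * \<i> * pb n A B m), pb n B (\<lambda>m. 2 * \<i> * pb n A B m))"
    unfolding symb.simps ab Let_def prod.case by (rule refl)
  have I: "INV2 n \<delta> xp xm A B" using Suc ab by simp
  show ?case unfolding sy fst_conv snd_conv INV2_def
    by (rule symb_step[OF sd]) (use I in \<open>auto simp: INV2_def\<close>)
qed

lemma shape_disj:
  assumes sd: "\<And>j. int (xp j) - int (xm j) = \<delta> j" and dz: "\<delta> k \<noteq> 0"
    and sA: "shape xp xm A" and sB: "shape xm xp B" and mA: "m \<in> wsupp A"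
  shows "B m = 0"
proof (rule ccontr)
  assume "B m \<noteq> 0" hence mB: "m \<in> wsupp B" by (simp add: wsupp_def)
  obtain c where c: "m = (\<lambda>j. xp j + c j, \<lambda>j. xm j + c j)" using sA mA by (auto simp: shape_def)
  obtain c' where c': "m = (\<lambda>j. xm j + c' j, \<lambda>j. xp j + c' j)" using sB mB by (auto simp: shape_def)
  have "xp k + c k = xm k + c' k" "xm k + c k = xp k + c' k"
    using c c' by (auto simp: fun_eq_iff)
  hence "xp k = xm k" by linarith
  thus False using sd[of k] dz by simp
qed

lemma wdeg_of:
  assumes g: "good n y" and dl: "degle d y" and t: "topd d y m0 \<noteq> 0"
  shows "wdeg y = ereal (real d)"
proof -
  have y0: "y m0 \<noteq> 0" and dm0: "mono_deg m0 = d" using t by (auto simp: topd_def split: if_splits)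
  have fin: "finite (wsupp y)" using g by (simp add: good_def)
  have ne: "y \<noteq> (\<lambda>_. 0)" using y0 by auto
  have "Max (mono_deg ` wsupp y) = d"
  proof (rule Max_eqI)
    show "finite (mono_deg ` wsupp y)" using fin by simp
    show "\<And>z. z \<in> mono_deg ` wsupp y \<Longrightarrow> z \<le> d" using dl by (auto simp: degle_def)
    show "d \<in> mono_deg ` wsupp y" using y0 dm0 by (auto simp: wsupp_def)
  qed
  thus ?thesis using ne by (simp add: wdeg_def)
qed


lemma Ev_wbasis: "Ev n \<delta> x (wbasis m) = pii n \<delta> (\<lambda>j. fst m j - x j)"
proof -
  have "wsupp (wbasis m) = {m}" by (auto simp: wsupp_def wbasis_def)
  thus ?thesis by (simp add: Ev_def wbasis_def)
qed

theorem proposition9: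
  fixes n :: nat and \<alpha> \<beta> :: "nat \<Rightarrow> nat"
  assumes "n \<ge> 1"
    and "\<forall>j\<ge>n. \<alpha> j = 0 \<and> \<beta> j = 0"
    and "lex_ge n \<alpha> \<beta>"
    and "(\<exists>k<n. \<alpha> k + \<beta> k \<ge> 2 \<and> \<alpha> k \<noteq> \<beta> k) \<or>
         (\<exists>k<n. \<exists>k'<n. k \<noteq> k' \<and> \<alpha> k + \<beta> k = 1 \<and> \<alpha> k' + \<beta> k' = 1)"
  shows "\<forall>l. \<forall>y \<in> {fst (chain2 (gplus (\<alpha>, \<beta>)) (gminus (\<alpha>, \<beta>)) l),
                    snd (chain2 (gplus (\<alpha>, \<beta>)) (gminus (\<alpha>, \<beta>)) l)}.
           wdeg y = ereal (3 ^ l * (real (\<Sum>j<n. \<alpha> j + \<beta> j) - 2) + 2)"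
proof -
  define \<delta> where "\<delta> = (\<lambda>j. int (\<alpha> j) - int (\<beta> j))"
  define xp where "xp = (\<lambda>j. \<alpha> j - \<beta> j)"
  define xm where "xm = (\<lambda>j. \<beta> j - \<alpha> j)"
  have sd: "\<And>j. int (xp j) - int (xm j) = \<delta> j"
    unfolding xp_def xm_def \<delta>_def by (case_tac "\<alpha> j \<le> \<beta> j") (auto simp: of_nat_diff)
  define S0 where "S0 = wbasis (\<alpha>, \<beta>)"
  define T0 where "T0 = wbasis (\<beta>, \<alpha>)"
  define g where "g = (\<Sum>j<n. \<alpha> j + \<beta> j)"
  define p where "p = gplus (\<alpha>, \<beta>)"
  define q where "q = gminus (\<alpha>, \<beta>)"
  have ab: "(\<alpha>, \<beta>) \<in> Bn n" "(\<beta>, \<alpha>) \<in> Bn n" using assms(2) by (auto simp: Bn_def)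
  have wsb: "wsupp (wbasis m) = {m}" for m by (auto simp: wsupp_def wbasis_def)
  have gS0: "good n S0" "good n T0" by (auto simp: good_def S0_def T0_def wsb ab)
  have dgab: "mono_deg (\<alpha>, \<beta>) = g" "mono_deg (\<beta>, \<alpha>) = g"
    using mono_deg_Bn[OF ab(1)] mono_deg_Bn[OF ab(2)] by (auto simp: mdeg_def g_def add.commute)
  have dp: "wdagger (wbasis (\<alpha>, \<beta>)) = wbasis (\<beta>, \<alpha>)"
    by (auto simp: wdagger_def wbasis_def fun_eq_iff)
  have pE: "p = (\<lambda>m. \<i> * (S0 m + T0 m))" unfolding p_def gplus_def dp S0_def T0_def by (simp add: add.commute)
  have qE: "q = (\<lambda>m. T0 m - S0 m)" unfolding q_def gminus_def dp S0_def T0_def ..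
  have out0: "S0 m = 0 \<and> T0 m = 0" if "m \<noteq> (\<alpha>, \<beta>)" "m \<noteq> (\<beta>, \<alpha>)" for m
    using that by (simp add: S0_def T0_def wbasis_def)
  have g2: "g \<ge> 2" and dk: "\<exists>k. \<delta> k \<noteq> 0"
    and degI: "2 \<le> (\<Sum>j<n. if \<alpha> j = \<beta> j then 0 else \<alpha> j + \<beta> j)"
  proof -
    let ?h = "\<lambda>j. if \<alpha> j = \<beta> j then 0 else \<alpha> j + \<beta> j"
    have hle: "(\<Sum>j<n. ?h j) \<le> g" unfolding g_def by (rule sum_mono) auto
    from assms(4) have "(\<exists>k. \<delta> k \<noteq> 0) \<and> 2 \<le> (\<Sum>j<n. ?h j)"
    proof
      assume "\<exists>k<n. \<alpha> k + \<beta> k \<ge> 2 \<and> \<alpha> k \<noteq> \<beta> k"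
      then obtain k where k: "k<n" "\<alpha> k + \<beta> k \<ge> 2" "\<alpha> k \<noteq> \<beta> k" by blast
      have "?h k \<le> (\<Sum>j<n. ?h j)" by (rule member_le_sum) (use k in auto)
      moreover have "\<delta> k \<noteq> 0" using k by (simp add: \<delta>_def)
      ultimately show ?thesis using k by auto
    next
      assume "\<exists>k<n. \<exists>k'<n. k \<noteq> k' \<and> \<alpha> k + \<beta> k = 1 \<and> \<alpha> k' + \<beta> k' = 1"
      then obtain k k' where k: "k<n" "k'<n" "k \<noteq> k'" "\<alpha> k + \<beta> k = 1" "\<alpha> k' + \<beta> k' = 1" by blast
      have ne: "\<alpha> k \<noteq> \<beta> k" "\<alpha> k' \<noteq> \<beta> k'" using k by arith+
      have "(\<Sum>j\<in>{k,k'}. ?h j) \<le> (\<Sum>j<n. ?h j)" by (rule sum_mono2) (use k in auto)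
      moreover have "(\<Sum>j\<in>{k,k'}. ?h j) = 2" using k ne by simp
      moreover have "\<delta> k \<noteq> 0" using ne by (simp add: \<delta>_def)
      ultimately show ?thesis by auto
    qed
    thus "\<exists>k. \<delta> k \<noteq> 0" "2 \<le> (\<Sum>j<n. ?h j)" by auto
    thus "g \<ge> 2" using hle by linarith
  qed
  have I0: "INV n g p q S0 T0"
  proof -
    have pz: "p m = 0 \<and> q m = 0" if "m \<notin> {(\<alpha>, \<beta>), (\<beta>, \<alpha>)}" for m
      using out0[of m] that by (simp add: pE qE)
    have sp: "wsupp p \<subseteq> {(\<alpha>, \<beta>), (\<beta>, \<alpha>)}" "wsupp q \<subseteq> {(\<alpha>, \<beta>), (\<beta>, \<alpha>)}"
      unfolding wsupp_def using pz by blast+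
    have gp: "good n p" "good n q" using sp ab unfolding good_def by (auto intro: finite_subset)
    have dlp: "degle g p" "degle g q" using sp dgab unfolding degle_def by auto
    have tp: "topd g p = (\<lambda>m. \<i> * (S0 m + T0 m))"
    proof
      fix m show "topd g p m = \<i> * (S0 m + T0 m)"
      proof (cases "m = (\<alpha>, \<beta>) \<or> m = (\<beta>, \<alpha>)")
        case True thus ?thesis using dgab by (auto simp: topd_def pE)
      next
        case False thus ?thesis using out0 by (auto simp: topd_def pE)
      qed
    qed
    have tq: "topd g q = (\<lambda>m. T0 m - S0 m)"
    proof
      fix m show "topd g q m = T0 m - S0 m"
      proof (cases "m = (\<alpha>, \<beta>) \<or> m = (\<beta>, \<alpha>)")
        case True thus ?thesis using dgab by (auto simp: topd_def qE)
      next
        case False thus ?thesis using out0 by (auto simp: topd_def qE)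
      qed
    qed
    show ?thesis unfolding INV_def using gp dlp tp tq gS0 by auto
  qed
  have J0: "INV2 n \<delta> xp xm S0 T0"
  proof -
    define \<mu> where "\<mu> = (\<lambda>j. min (\<alpha> j) (\<beta> j))"
    have sh1: "shape xp xm S0" unfolding shape_def S0_def wsb
    proof
      fix m assume "m \<in> {(\<alpha>, \<beta>)}"
      hence "m = (\<lambda>j. xp j + \<mu> j, \<lambda>j. xm j + \<mu> j)" by (auto simp: xp_def xm_def \<mu>_def fun_eq_iff)
      thus "\<exists>c. m = (\<lambda>j. xp j + c j, \<lambda>j. xm j + c j)" by (rule exI[where x=\<mu>])
    qed
    have sh2: "shape xm xp T0" unfolding shape_def T0_def wsb
    proof
      fix m assume "m \<in> {(\<beta>, \<alpha>)}"
      hence "m = (\<lambda>j. xm j + \<mu> j, \<lambda>j. xp j + \<mu> j)" by (auto simp: xp_def xm_def \<mu>_def fun_eq_iff)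
      thus "\<exists>c. m = (\<lambda>j. xm j + c j, \<lambda>j. xp j + c j)" by (rule exI[where x=\<mu>])
    qed
    have e1: "Ev n \<delta> xp S0 = pii n \<delta> (\<lambda>j. \<alpha> j - xp j)" unfolding S0_def Ev_wbasis by simp
    have e2: "Ev n \<delta> xm T0 = pii n \<delta> (\<lambda>j. \<beta> j - xm j)" unfolding T0_def Ev_wbasis by simp
    have "degree (pii n \<delta> (\<lambda>j. xp j + xm j)) + degree (Ev n \<delta> xp S0) + degree (Ev n \<delta> xm T0)
      = (\<Sum>j<n. (if \<delta> j = 0 then 0 else xp j + xm j) + (if \<delta> j = 0 then 0 else \<alpha> j - xp j)
           + (if \<delta> j = 0 then 0 else \<beta> j - xm j))"
      unfolding e1 e2 degree_pii by (simp add: sum.distrib)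
    also have "\<dots> = (\<Sum>j<n. if \<alpha> j = \<beta> j then 0 else \<alpha> j + \<beta> j)"
      by (rule sum.cong) (auto simp: \<delta>_def xp_def xm_def)
    finally have "2 \<le> degree (pii n \<delta> (\<lambda>j. xp j + xm j)) + degree (Ev n \<delta> xp S0) + degree (Ev n \<delta> xm T0)"
      using degI by simp
    thus ?thesis unfolding INV2_def using gS0 sh1 sh2 e1 e2 pii_nz by auto
  qed
  obtain k where dk': "\<delta> k \<noteq> 0" using dk by blast
  show ?thesis
  proof (intro allI ballI)
    fix l y
    assume y: "y \<in> {fst (chain2 (gplus (\<alpha>, \<beta>)) (gminus (\<alpha>, \<beta>)) l), snd (chain2 (gplus (\<alpha>, \<beta>)) (gminus (\<alpha>, \<beta>)) l)}"
    define d where "d = 3 ^ l * (g - 2) + 2"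
    obtain A B where AB: "symb n S0 T0 l = (A, B)" by (cases "symb n S0 T0 l")
    obtain y1 y2 where Y: "chain2 p q l = (y1, y2)" by (cases "chain2 p q l")
    have I: "INV n d y1 y2 A B" using INV_all[OF I0 g2, of l] AB Y by (simp add: d_def)
    have J: "INV2 n \<delta> xp xm A B" using INV2_all[OF sd J0, of l] AB by simp
    have EA: "Ev n \<delta> xp A \<noteq> 0" using J by (simp add: INV2_def)
    have "wsupp A \<noteq> {}"
    proof
      assume "wsupp A = {}"
      hence "Ev n \<delta> xp A = 0" by (simp add: Ev_def)
      thus False using EA by simp
    qed
    then obtain m0 where m0: "m0 \<in> wsupp A" by blast
    have B0: "B m0 = 0" by (rule shape_disj[where xp=xp and xm=xm and \<delta>=\<delta> and k=k, OF sd dk']) (use J m0 in \<open>auto simp: INV2_def\<close>)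
    have A0: "A m0 \<noteq> 0" using m0 by (simp add: wsupp_def)
    have t1: "topd d y1 m0 \<noteq> 0" using I A0 B0 by (simp add: INV_def)
    have t2: "topd d y2 m0 \<noteq> 0" using I A0 B0 by (simp add: INV_def)
    have w1: "wdeg y1 = ereal (real d)" by (rule wdeg_of[OF _ _ t1]) (use I in \<open>auto simp: INV_def\<close>)
    have w2: "wdeg y2 = ereal (real d)" by (rule wdeg_of[OF _ _ t2]) (use I in \<open>auto simp: INV_def\<close>)
    have rd: "real d = 3 ^ l * (real (\<Sum>j<n. \<alpha> j + \<beta> j) - 2) + 2"
      using g2 unfolding d_def g_def by (simp add: of_nat_diff)
    have "y = y1 \<or> y = y2" using y Y unfolding p_def q_def by auto
    thus "wdeg y = ereal (3 ^ l * (real (\<Sum>j<n. \<alpha> j + \<beta> j) - 2) + 2)"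
      using w1 w2 rd by auto
  qed
qed

end
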